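(* There exist an absolute constant $C>0$ and a sample size $m=\tilde O\!\left(\frac{1}{\epsilon^2\gamma}kD\right)$ (where $\tilde O$ hides factors polylogarithmic in $\frac{kD}{\epsilon\gamma}$) such that the following holds. Let $P$ be a set of $n$ points in $\mathbb{R}^D$, $z<n$ a positive integer, $\gamma=z/n$, $0<\epsilon\leq 0.5$, and let $S\subseteq P$ be a subset of size $m$ chosen uniformly at random. Consider $S$ as an instance of $k$-center clustering with outliers with number of outliers $z'=(1+\epsilon)\gamma|S|$. Let $\alpha>0$. Then with constant probability (over the choice of $S$): if a set $E$ of $k$ centers in $\mathbb{R}^D$ is an $\alpha$-approximate solution of $(k,z')_\epsilon$-center clustering on $S$, then $E$ is an $\alpha$-approximate solution of $(k,z)_{C\epsilon}$-center clustering on $P$.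
   Context: For a finite point set $Q\subset\mathbb{R}^D$ of size $N$ and a number $w<N$ of outliers, the $k$-center clustering with $w$ outliers problem asks for $Q'\subseteq Q$ with $|Q'|\geq N-w$ and $k$ centers $c_1,\dots,c_k\in\mathbb{R}^D$ (arbitrary points) minimizing $\max_{p\in Q'}\min_j\|p-c_j\|$; let $r_{\mathtt{opt}}(Q,w)$ be its optimal value. For $\epsilon'\geq0$ and a finite center set $A\subset\mathbb{R}^D$, $\phi_{\epsilon'}(Q,A)=\min\{\max_{p\in Q'}\min_{c\in A}\|p-c\|\;:\;Q'\subseteq Q,\ |Q'|\geq N-(1+\epsilon')w\}$. A set $A$ of $k$ centers is an $\alpha$-approximate solution of $(k,w)_{\epsilon'}$-center clustering on $Q$ if $\phi_{\epsilon'}(Q,A)\leq\alpha\, r_{\mathtt{opt}}(Q,w)$. *)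

theory Defs
  imports "HOL-Probability.Probability"
begin

text \<open>Points of R^D are represented as functions nat => real vanishing outside {..<D},
  so that the dimension D can be quantified inside the statement.\<close>

definition RD :: "nat \<Rightarrow> (nat \<Rightarrow> real) set" where
  "RD D = {p. \<forall>i\<ge>D. p i = 0}"

definition edist :: "nat \<Rightarrow> (nat \<Rightarrow> real) \<Rightarrow> (nat \<Rightarrow> real) \<Rightarrow> real" where
  "edist D p q = L2_set (\<lambda>i. p i - q i) {..<D}"

definition cover_cost :: "nat \<Rightarrow> (nat \<Rightarrow> real) set \<Rightarrow> (nat \<Rightarrow> real) set \<Rightarrow> real" where
  "cover_cost D A Q' = (if Q' = {} then 0 else Max ((\<lambda>p. Min ((\<lambda>c. edist D p c) ` A)) ` Q'))"

definition phi :: "nat \<Rightarrow> real \<Rightarrow> (nat \<Rightarrow> real) set \<Rightarrow> real \<Rightarrow> (nat \<Rightarrow> real) set \<Rightarrow> real" where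
  "phi D eps' Q w A = Min (cover_cost D A ` {Q'. Q' \<subseteq> Q \<and> real (card Q') \<ge> real (card Q) - (1 + eps') * w})"

definition centers :: "nat \<Rightarrow> nat \<Rightarrow> (nat \<Rightarrow> real) set \<Rightarrow> bool" where
  "centers D k A \<longleftrightarrow> finite A \<and> A \<noteq> {} \<and> card A \<le> k \<and> A \<subseteq> RD D"

definition r_opt :: "nat \<Rightarrow> nat \<Rightarrow> (nat \<Rightarrow> real) set \<Rightarrow> real \<Rightarrow> real" where
  "r_opt D k Q w = Inf {cover_cost D A Q' | A Q'. centers D k A \<and> Q' \<subseteq> Q \<and> real (card Q') \<ge> real (card Q) - w}"

definition approx_sol :: "nat \<Rightarrow> nat \<Rightarrow> real \<Rightarrow> (nat \<Rightarrow> real) set \<Rightarrow> real \<Rightarrow> real \<Rightarrow> (nat \<Rightarrow> real) set \<Rightarrow> bool" where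
  "approx_sol D k eps' Q w alpha A \<longleftrightarrow> centers D k A \<and> phi D eps' Q w A \<le> alpha * r_opt D k Q w"

end

theory Submission
  imports Defs
begin
definition msub :: "'a set \<Rightarrow> nat \<Rightarrow> 'a set set" where
  "msub U m = {S. S \<subseteq> U \<and> card S = m}"

lemma finite_msub: "finite U \<Longrightarrow> finite (msub U m)"
  unfolding msub_def by (rule finite_subset[of _ "Pow U"]) auto

lemma card_msub: "finite U \<Longrightarrow> card (msub U m) = card U choose m"
  unfolding msub_def using n_subsets by blast

lemma choose_ratio:
  assumes "i \<le> m" "m \<le> N" "N > 0"
  shows "real ((N - i) choose (m - i)) \<le> real (N choose m) * (real m / real N) ^ i"
  using assms(1)
proof (induction i)
  case 0 then show ?case by simp
next
  case (Suc i)
  have im: "i < m" using Suc.prems by simp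
  have eq: "real (N - i) * real ((N - Suc i) choose (m - Suc i)) = real ((N - i) choose (m - i)) * real (m - i)"
  proof -
    have "Suc (N - Suc i) * ((N - Suc i) choose (m - Suc i)) = (Suc (N - Suc i) choose Suc (m - Suc i)) * Suc (m - Suc i)"
      by (rule Suc_times_binomial_eq)
    moreover have "Suc (N - Suc i) = N - i" "Suc (m - Suc i) = m - i" using im assms by auto
    ultimately show ?thesis by (metis of_nat_mult)
  qed
  have Ni: "real (N - i) > 0" using im assms by simp
  have r: "real (m - i) / real (N - i) \<le> real m / real N"
    using im assms mult_right_mono[of "real m" "real N" "real i"] by (simp add: divide_simps of_nat_diff) (simp add: algebra_simps)
  have "real ((N - Suc i) choose (m - Suc i)) = real ((N - i) choose (m - i)) * (real (m - i) / real (N - i))"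
    using eq Ni by (simp add: field_simps)
  also have "\<dots> \<le> (real (N choose m) * (real m / real N) ^ i) * (real m / real N)"
    using Suc.IH[OF less_imp_le[OF im]] r by (intro mult_mono) auto
  finally show ?case by (simp add: algebra_simps)
qed

lemma card_msub_sup:
  assumes "finite U" "I \<subseteq> U" "m \<le> card U" "card U > 0"
  shows "real (card {S\<in>msub U m. I \<subseteq> S}) \<le> real (card U choose m) * (real m / real (card U)) ^ card I"
proof (cases "card I \<le> m")
  case False
  have e: "{S\<in>msub U m. I \<subseteq> S} = {}"
  proof (rule ccontr)
    assume "{S\<in>msub U m. I \<subseteq> S} \<noteq> {}"
    then obtain S where "S \<in> msub U m" "I \<subseteq> S" by auto
    then have "card I \<le> m" using assms unfolding msub_def
      by (metis (mono_tags, lifting) card_mono finite_subset mem_Collect_eq)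
    then show False using False by simp
  qed
  show ?thesis unfolding e by simp
next
  case True
  have fI: "finite I" using assms finite_subset by blast
  have "bij_betw (\<lambda>S. S - I) {S\<in>msub U m. I \<subseteq> S} (msub (U - I) (m - card I))"
  proof (rule bij_betw_byWitness[where f'="\<lambda>S. S \<union> I"])
    show "\<forall>a\<in>{S \<in> msub U m. I \<subseteq> S}. a - I \<union> I = a" by auto
    show "\<forall>a'\<in>msub (U - I) (m - card I). a' \<union> I - I = a'" unfolding msub_def by auto
    show "(\<lambda>S. S - I) ` {S \<in> msub U m. I \<subseteq> S} \<subseteq> msub (U - I) (m - card I)"
      unfolding msub_def using assms by (auto intro!: card_Diff_subset dest: finite_subset)
    show "(\<lambda>S. S \<union> I) ` msub (U - I) (m - card I) \<subseteq> {S \<in> msub U m. I \<subseteq> S}"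
    proof
      fix x assume "x \<in> (\<lambda>S. S \<union> I) ` msub (U - I) (m - card I)"
      then obtain S where S: "S \<subseteq> U - I" "card S = m - card I" "x = S \<union> I" unfolding msub_def by auto
      have "finite S" using S assms finite_subset by blast
      then have "card (S \<union> I) = card S + card I" using S fI by (subst card_Un_disjoint) auto
      then show "x \<in> {S \<in> msub U m. I \<subseteq> S}" using S True assms unfolding msub_def by auto
    qed
  qed
  then have "card {S\<in>msub U m. I \<subseteq> S} = card (msub (U - I) (m - card I))" by (rule bij_betw_same_card)
  also have "\<dots> = (card U - card I) choose (m - card I)"
    using assms fI by (simp add: card_msub card_Diff_subset)
  finally show ?thesis using choose_ratio[OF True assms(3,4)] by simp
qed

lemma ind_prod:
  fixes v :: real
  assumes "finite X"
  shows "(\<Prod>i\<in>X. v * (if i \<in> S then 1 else 0)) = (if X \<subseteq> S then v ^ card X else 0)"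
proof (cases "X \<subseteq> S")
  case True then show ?thesis by (auto intro: prod.cong[THEN trans] simp: subset_iff)
next
  case False
  then obtain x where "x \<in> X" "x \<notin> S" by auto
  then show ?thesis using assms False by (auto intro: prod_zero)
qed

lemma mgf_in:
  fixes u v :: real
  assumes "finite U" "A \<subseteq> U" "u \<ge> 0" "v \<ge> 0" "card U > 0" "m \<le> card U"
  shows "(\<Sum>S\<in>msub U m. \<Prod>i\<in>A. u + v * (if i \<in> S then 1 else 0))
          \<le> real (card U choose m) * (u + v * (real m / real (card U))) ^ card A"
proof -
  define q where "q = real m / real (card U)"
  have fA: "finite A" using assms finite_subset by blast
  have exp1: "(\<Prod>i\<in>A. u + v * (if i \<in> S then 1 else 0))
        = (\<Sum>X\<in>Pow A. (if X \<subseteq> S then v ^ card X else 0) * u ^ card (A - X))" for S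
    using prod_add[OF fA, of "\<lambda>i. v * (if i \<in> S then 1 else 0)" "\<lambda>_. u"] fA
    by (simp add: add.commute ind_prod finite_subset)
  have "(\<Sum>S\<in>msub U m. \<Prod>i\<in>A. u + v * (if i \<in> S then 1 else 0))
      = (\<Sum>X\<in>Pow A. \<Sum>S\<in>msub U m. (if X \<subseteq> S then v ^ card X else 0) * u ^ card (A - X))"
    unfolding exp1 by (rule sum.swap)
  also have "\<dots> = (\<Sum>X\<in>Pow A. (v ^ card X * u ^ card (A - X)) * real (card {S\<in>msub U m. X \<subseteq> S}))"
  proof (rule sum.cong[OF refl])
    fix X
    have "(\<Sum>S\<in>msub U m. (if X \<subseteq> S then v ^ card X else 0) * u ^ card (A - X))
        = (\<Sum>S\<in>msub U m. if X \<subseteq> S then v ^ card X * u ^ card (A - X) else 0)"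
      by (rule sum.cong) auto
    also have "\<dots> = (\<Sum>S\<in>{S\<in>msub U m. X \<subseteq> S}. v ^ card X * u ^ card (A - X))"
      using finite_msub[OF assms(1)] by (rule sum.inter_filter[symmetric])
    finally show "(\<Sum>S\<in>msub U m. (if X \<subseteq> S then v ^ card X else 0) * u ^ card (A - X))
       = (v ^ card X * u ^ card (A - X)) * real (card {S\<in>msub U m. X \<subseteq> S})" by simp
  qed
  also have "\<dots> \<le> (\<Sum>X\<in>Pow A. (v ^ card X * u ^ card (A - X)) * (real (card U choose m) * q ^ card X))"
  proof (rule sum_mono)
    fix X assume "X \<in> Pow A"
    then have "X \<subseteq> U" using assms by auto
    then show "(v ^ card X * u ^ card (A - X)) * real (card {S\<in>msub U m. X \<subseteq> S})
        \<le> (v ^ card X * u ^ card (A - X)) * (real (card U choose m) * q ^ card X)"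
      using card_msub_sup[OF assms(1) _ assms(6,5)] assms unfolding q_def
      by (intro mult_left_mono) auto
  qed
  also have "\<dots> = real (card U choose m) * (\<Sum>X\<in>Pow A. (\<Prod>i\<in>X. v * q) * (\<Prod>i\<in>A - X. u))"
    by (simp add: sum_distrib_left power_mult_distrib algebra_simps)
  also have "(\<Sum>X\<in>Pow A. (\<Prod>i\<in>X. v * q) * (\<Prod>i\<in>A - X. u)) = (\<Prod>i\<in>A. v * q + u)"
    using prod_add[OF fA, of "\<lambda>_. v * q" "\<lambda>_. u"] by simp
  also have "\<dots> = (u + v * q) ^ card A" by (simp add: add.commute)
  finally show ?thesis unfolding q_def .
qed

lemma mgf_out:
  fixes u v :: real
  assumes "finite U" "A \<subseteq> U" "u \<ge> 0" "v \<ge> 0" "card U > 0" "m \<le> card U"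
  shows "(\<Sum>S\<in>msub U m. \<Prod>i\<in>A. u + v * (if i \<notin> S then 1 else 0))
          \<le> real (card U choose m) * (u + v * ((real (card U) - real m) / real (card U))) ^ card A"
proof -
  have bij: "bij_betw (\<lambda>S. U - S) (msub U m) (msub U (card U - m))"
  proof (rule bij_betw_byWitness[where f'="\<lambda>S. U - S"])
    show "\<forall>a\<in>msub U m. U - (U - a) = a" unfolding msub_def by auto
    show "\<forall>a'\<in>msub U (card U - m). U - (U - a') = a'" unfolding msub_def by auto
    show "(\<lambda>S. U - S) ` msub U m \<subseteq> msub U (card U - m)"
      unfolding msub_def using assms by (auto simp: card_Diff_subset finite_subset)
    show "(\<lambda>S. U - S) ` msub U (card U - m) \<subseteq> msub U m"
      unfolding msub_def using assms by (auto simp: card_Diff_subset finite_subset)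
  qed
  have "(\<Sum>S\<in>msub U m. \<Prod>i\<in>A. u + v * (if i \<notin> S then 1 else 0))
      = (\<Sum>S\<in>msub U m. \<Prod>i\<in>A. u + v * (if i \<in> U - S then 1 else 0))"
    using assms(2) by (intro sum.cong prod.cong) auto
  also have "\<dots> = (\<Sum>S\<in>msub U (card U - m). \<Prod>i\<in>A. u + v * (if i \<in> S then 1 else 0))"
    by (rule sum.reindex_bij_betw[OF bij])
  also have "\<dots> \<le> real (card U choose (card U - m)) * (u + v * (real (card U - m) / real (card U))) ^ card A"
    using assms by (intro mgf_in) auto
  also have "\<dots> = real (card U choose m) * (u + v * ((real (card U) - real m) / real (card U))) ^ card A"
    using assms by (simp add: binomial_symmetric[symmetric] of_nat_diff)
  finally show ?thesis .
qed

lemma sum_ind_card: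
  assumes "finite A"
  shows "(\<Sum>i\<in>A. (if i \<in> S then 1 else 0::real)) = real (card (S \<inter> A))"
proof -
  have "(\<Sum>i\<in>A. (if i \<in> S then 1 else 0::real)) = (\<Sum>i\<in>{i\<in>A. i \<in> S}. 1)"
    by (rule sum.inter_filter[symmetric, OF assms])
  also have "{i\<in>A. i \<in> S} = S \<inter> A" by auto
  finally show ?thesis by simp
qed

lemma exp_ind_prod:
  assumes "finite A"
  shows "exp (l * real (card (S \<inter> A))) = (\<Prod>i\<in>A. 1 + (exp l - 1) * (if i \<in> S then 1 else 0))"
proof -
  have "exp (l * real (card (S \<inter> A))) = exp (\<Sum>i\<in>A. l * (if i \<in> S then 1 else 0))"
    using sum_ind_card[OF assms, of S] sum_distrib_left[of l "\<lambda>i. (if i \<in> S then 1 else 0::real)" A] assms by simp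
  also have "\<dots> = (\<Prod>i\<in>A. exp (l * (if i \<in> S then 1 else 0)))" using assms by (rule exp_sum)
  also have "\<dots> = (\<Prod>i\<in>A. 1 + (exp l - 1) * (if i \<in> S then 1 else 0))"
    by (rule prod.cong) auto
  finally show ?thesis .
qed

lemma exp_ind_prod_neg:
  assumes "finite A"
  shows "exp (- l * real (card (S \<inter> A))) = (\<Prod>i\<in>A. exp (-l) + (1 - exp (-l)) * (if i \<notin> S then 1 else 0))"
proof -
  have "exp (- l * real (card (S \<inter> A))) = exp (\<Sum>i\<in>A. - l * (if i \<in> S then 1 else 0))"
    using sum_ind_card[OF assms, of S] sum_distrib_left[of "-l" "\<lambda>i. (if i \<in> S then 1 else 0::real)" A] assms by simp
  also have "\<dots> = (\<Prod>i\<in>A. exp (- l * (if i \<in> S then 1 else 0)))" using assms by (rule exp_sum)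
  also have "\<dots> = (\<Prod>i\<in>A. exp (-l) + (1 - exp (-l)) * (if i \<notin> S then 1 else 0))"
    by (rule prod.cong) auto
  finally show ?thesis .
qed

lemma pow_le_exp:
  fixes x :: real
  assumes "x \<ge> -1"
  shows "(1 + x) ^ n \<le> exp (real n * x)"
proof -
  have "(1 + x) ^ n \<le> exp x ^ n" using assms by (intro power_mono) auto
  also have "\<dots> = exp (real n * x)" by (simp add: exp_of_nat_mult)
  finally show ?thesis .
qed

lemma markov_count:
  fixes f :: "'b \<Rightarrow> real"
  assumes "finite X" "\<And>S. S \<in> X \<Longrightarrow> f S \<ge> 0" "\<And>S. S \<in> X \<Longrightarrow> P S \<Longrightarrow> f S \<ge> c"
  shows "real (card {S\<in>X. P S}) * c \<le> (\<Sum>S\<in>X. f S)"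
proof -
  have "real (card {S\<in>X. P S}) * c = (\<Sum>S\<in>{S\<in>X. P S}. c)" by simp
  also have "\<dots> \<le> (\<Sum>S\<in>{S\<in>X. P S}. f S)" using assms by (intro sum_mono) auto
  also have "\<dots> \<le> (\<Sum>S\<in>X. f S)" using assms by (intro sum_mono2) auto
  finally show ?thesis .
qed

lemma chernoff_upper:
  fixes mu t :: real
  assumes "finite U" "A \<subseteq> U" "card U > 0" "m \<le> card U"
    "real (card A) * real m / real (card U) \<le> mu" "0 < mu" "mu \<le> t" "t \<le> 3 * mu"
  shows "real (card {S\<in>msub U m. t \<le> real (card (S \<inter> A))}) \<le> real (card U choose m) * exp (- ((t - mu)^2 / (4 * mu)))"
proof -
  define l where "l = (t - mu) / (2 * mu)"
  have l0: "0 \<le> l" and l1: "l \<le> 1" using assms unfolding l_def by (auto simp: field_simps)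
  have fA: "finite A" using assms finite_subset by blast
  define q where "q = real m / real (card U)"
  have "real (card {S\<in>msub U m. t \<le> real (card (S \<inter> A))}) * exp (l * t)
      \<le> (\<Sum>S\<in>msub U m. exp (l * real (card (S \<inter> A))))"
    using l0 by (intro markov_count finite_msub assms(1)) (auto intro: mult_left_mono)
  also have "\<dots> = (\<Sum>S\<in>msub U m. \<Prod>i\<in>A. 1 + (exp l - 1) * (if i \<in> S then 1 else 0))"
    using exp_ind_prod[OF fA] assms by simp
  also have "\<dots> \<le> real (card U choose m) * (1 + (exp l - 1) * q) ^ card A"
    unfolding q_def using assms l0 by (intro mgf_in) auto
  also have "\<dots> \<le> real (card U choose m) * exp (real (card A) * ((exp l - 1) * q))"
  proof -
    have "0 \<le> (exp l - 1) * q" using l0 unfolding q_def by auto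
    then show ?thesis by (intro mult_left_mono pow_le_exp) auto
  qed
  also have "\<dots> \<le> real (card U choose m) * exp ((exp l - 1) * mu)"
  proof -
    have "real (card A) * q \<le> mu" using assms unfolding q_def by simp
    then have "real (card A) * ((exp l - 1) * q) \<le> (exp l - 1) * mu"
      using l0 mult_left_mono[of "real (card A) * q" mu "exp l - 1"] by (simp add: algebra_simps)
    then show ?thesis by (intro mult_left_mono) auto
  qed
  also have "\<dots> \<le> real (card U choose m) * exp ((l + l^2) * mu)"
    using exp_bound[OF l0 l1] assms by (intro mult_left_mono) auto
  finally have "real (card {S\<in>msub U m. t \<le> real (card (S \<inter> A))})
      \<le> real (card U choose m) * exp ((l + l^2) * mu) / exp (l * t)"
    by (simp add: field_simps)
  also have "\<dots> = real (card U choose m) * exp ((l + l^2) * mu - l * t)"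
    by (simp add: exp_diff)
  also have "(l + l^2) * mu - l * t = - ((t - mu)^2 / (4 * mu))"
    using assms unfolding l_def by (simp add: field_simps power2_eq_square)
  finally show ?thesis .
qed

lemma chernoff_lower:
  fixes mu t :: real
  assumes "finite U" "A \<subseteq> U" "card U > 0" "m \<le> card U"
    "mu \<le> real (card A) * real m / real (card U)" "0 < mu" "0 \<le> t" "t \<le> mu"
  shows "real (card {S\<in>msub U m. real (card (S \<inter> A)) \<le> t}) \<le> real (card U choose m) * exp (- ((mu - t)^2 / (4 * mu)))"
proof -
  define l where "l = (mu - t) / (2 * mu)"
  have l0: "0 \<le> l" and l1: "l \<le> 1" using assms unfolding l_def by (auto simp: field_simps)
  have fA: "finite A" using assms finite_subset by blast
  define q where "q = real m / real (card U)"
  have q01: "0 \<le> q" "q \<le> 1" using assms unfolding q_def by auto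
  have el: "exp (-l) \<le> 1 - l + l^2"
  proof -
    have "exp (-l) = 1 / exp l" by (simp add: exp_minus field_simps)
    also have "\<dots> \<le> 1 / (1 + l)" using l0 by (intro divide_left_mono) (auto intro: add_pos_nonneg)
    also have "\<dots> \<le> 1 - l + l^2"
    proof -
      have "1 \<le> (1 - l + l^2) * (1 + l)" using l0 by (simp add: algebra_simps power2_eq_square power3_eq_cube)
      then show ?thesis using l0 by (simp add: field_simps)
    qed
    finally show ?thesis .
  qed
  have e1: "exp (-l) \<le> 1" using l0 by simp
  have "real (card {S\<in>msub U m. real (card (S \<inter> A)) \<le> t}) * exp (- l * t)
      \<le> (\<Sum>S\<in>msub U m. exp (- l * real (card (S \<inter> A))))"
    using l0 by (intro markov_count finite_msub assms(1)) (auto intro: mult_left_mono)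
  also have "\<dots> = (\<Sum>S\<in>msub U m. \<Prod>i\<in>A. exp (-l) + (1 - exp (-l)) * (if i \<notin> S then 1 else 0))"
    using exp_ind_prod_neg[OF fA] assms by simp
  also have "\<dots> \<le> real (card U choose m) * (exp (-l) + (1 - exp (-l)) * ((real (card U) - real m) / real (card U))) ^ card A"
    using assms e1 by (intro mgf_out) auto
  also have "(exp (-l) + (1 - exp (-l)) * ((real (card U) - real m) / real (card U))) = 1 + (- ((1 - exp (-l)) * q))"
  proof -
    have "(real (card U) - real m) / real (card U) = 1 - q" using assms unfolding q_def by (simp add: diff_divide_distrib card_gt_0_iff)
    then show ?thesis unfolding \<open>(real (card U) - real m) / real (card U) = 1 - q\<close> by (simp add: algebra_simps)
  qed
  also have "real (card U choose m) * (1 + (- ((1 - exp (-l)) * q))) ^ card A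
      \<le> real (card U choose m) * exp (real (card A) * (- ((1 - exp (-l)) * q)))"
  proof -
    have "(1 - exp (-l)) * q \<le> 1 * 1" using q01 e1 by (intro mult_mono) auto
    then show ?thesis by (intro mult_left_mono pow_le_exp) auto
  qed
  also have "\<dots> \<le> real (card U choose m) * exp (- ((1 - exp (-l)) * mu))"
  proof -
    have "mu \<le> real (card A) * q" using assms unfolding q_def by simp
    then have "(1 - exp (-l)) * mu \<le> real (card A) * ((1 - exp (-l)) * q)"
      using e1 mult_left_mono[of mu "real (card A) * q" "1 - exp (-l)"] by (simp add: algebra_simps)
    then show ?thesis by (intro mult_left_mono) auto
  qed
  also have "\<dots> \<le> real (card U choose m) * exp (- ((l - l^2) * mu))"
    using el assms by (intro mult_left_mono) auto
  finally have "real (card {S\<in>msub U m. real (card (S \<inter> A)) \<le> t})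
      \<le> real (card U choose m) * exp (- ((l - l^2) * mu)) / exp (- l * t)"
    by (simp add: field_simps)
  also have "\<dots> = real (card U choose m) * exp (- ((l - l^2) * mu) - (- l * t))"
    by (simp only: exp_diff times_divide_eq_right)
  also have "- ((l - l^2) * mu) - (- l * t) = - ((mu - t)^2 / (4 * mu))"
    using assms unfolding l_def by (simp add: field_simps power2_eq_square)
  finally show ?thesis .
qed

definition shatters :: "'a set set \<Rightarrow> 'a set \<Rightarrow> bool" where
  "shatters F Y \<longleftrightarrow> (\<forall>Z\<subseteq>Y. \<exists>B\<in>F. B \<inter> Y = Z)"

lemma pajor:
  assumes "finite T" "F \<subseteq> Pow T"
  shows "card F \<le> card {Y. Y \<subseteq> T \<and> shatters F Y}"
  using assms
proof (induction T arbitrary: F rule: finite_induct)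
  case empty
  show ?case
  proof (cases "F = {}")
    case True then show ?thesis by simp
  next
    case False
    then have F: "F = {{}}" using empty by auto
    have e: "{Y. Y \<subseteq> {} \<and> shatters F Y} = {{}}" unfolding shatters_def F by auto
    show ?thesis by (subst e) (simp add: F)
  qed
next
  case (insert x T)
  define Fo where "Fo = {A\<in>F. x \<notin> A}"
  define Fi where "Fi = {A\<in>F. x \<in> A}"
  define F0 where "F0 = (\<lambda>A. A - {x}) ` F"
  define F1 where "F1 = {B\<in>Pow T. B \<in> F \<and> insert x B \<in> F}"
  have finF: "finite F" using insert.prems insert.hyps(1) by (meson finite_Pow_iff finite_insert finite_subset)
  have F0T: "F0 \<subseteq> Pow T" using insert.prems unfolding F0_def by auto
  have F1T: "F1 \<subseteq> Pow T" unfolding F1_def by auto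
  have cF: "card F = card Fo + card Fi"
  proof -
    have "F = Fo \<union> Fi" "Fo \<inter> Fi = {}" unfolding Fo_def Fi_def by auto
    then show ?thesis using finF by (metis card_Un_disjoint finite_Un)
  qed
  have F0eq: "F0 = Fo \<union> (\<lambda>A. A - {x}) ` Fi"
  proof -
    have "F = Fo \<union> Fi" unfolding Fo_def Fi_def by auto
    then have "F0 = (\<lambda>A. A - {x}) ` Fo \<union> (\<lambda>A. A - {x}) ` Fi" unfolding F0_def by (simp add: image_Un)
    moreover have "(\<lambda>A. A - {x}) ` Fo = id ` Fo" by (rule image_cong) (auto simp: Fo_def)
    then have "(\<lambda>A. A - {x}) ` Fo = Fo" by (simp only: image_id id_apply)
    ultimately show ?thesis by (simp only:)
  qed
  have inj: "inj_on (\<lambda>A. A - {x}) Fi"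
  proof (rule inj_onI)
    fix A1 A2 assume "A1 \<in> Fi" "A2 \<in> Fi" "A1 - {x} = A2 - {x}"
    then have "insert x (A1 - {x}) = insert x (A2 - {x})" "x \<in> A1" "x \<in> A2" unfolding Fi_def by auto
    then show "A1 = A2" by (simp add: insert_absorb)
  qed
  have F1eq: "Fo \<inter> (\<lambda>A. A - {x}) ` Fi = F1"
  proof
    show "Fo \<inter> (\<lambda>A. A - {x}) ` Fi \<subseteq> F1"
    proof
      fix B assume "B \<in> Fo \<inter> (\<lambda>A. A - {x}) ` Fi"
      then obtain A where A: "B \<in> F" "x \<notin> B" "A \<in> F" "x \<in> A" "B = A - {x}" unfolding Fo_def Fi_def by auto
      then have "insert x B = A" by auto
      moreover have "B \<subseteq> T" using A insert.prems by auto
      ultimately show "B \<in> F1" using A unfolding F1_def by auto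
    qed
    show "F1 \<subseteq> Fo \<inter> (\<lambda>A. A - {x}) ` Fi"
    proof
      fix B assume B: "B \<in> F1"
      then have "x \<notin> B" using insert.hyps unfolding F1_def by auto
      then have "B = insert x B - {x}" by auto
      then show "B \<in> Fo \<inter> (\<lambda>A. A - {x}) ` Fi" using B \<open>x \<notin> B\<close> unfolding F1_def Fo_def Fi_def by auto
    qed
  qed
  have cF01: "card F = card F0 + card F1"
  proof -
    have fo: "finite Fo" "finite ((\<lambda>A. A - {x}) ` Fi)" using finF unfolding Fo_def Fi_def by auto
    have "card F0 + card F1 = card Fo + card ((\<lambda>A. A - {x}) ` Fi)"
      unfolding F0eq F1eq[symmetric] using card_Un_Int[OF fo] by simp
    also have "\<dots> = card Fo + card Fi" using card_image[OF inj] by simp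
    finally show ?thesis using cF by simp
  qed
  define Sh where "Sh = {Y. Y \<subseteq> insert x T \<and> shatters F Y}"
  have s0: "{Y. Y \<subseteq> T \<and> shatters F0 Y} \<subseteq> Sh"
  proof
    fix Y assume Y: "Y \<in> {Y. Y \<subseteq> T \<and> shatters F0 Y}"
    have "shatters F Y" unfolding shatters_def
    proof (intro allI impI)
      fix Z assume "Z \<subseteq> Y"
      then obtain B where B: "B \<in> F0" "B \<inter> Y = Z" using Y unfolding shatters_def by blast
      then obtain A where A: "A \<in> F" "B = A - {x}" unfolding F0_def by blast
      have "x \<notin> Y" using Y insert.hyps by blast
      then have "A \<inter> Y = Z" using A(2) B(2) by blast
      then show "\<exists>B\<in>F. B \<inter> Y = Z" using A(1) by blast
    qed
    then show "Y \<in> Sh" using Y unfolding Sh_def by auto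
  qed
  have s1: "insert x ` {Y. Y \<subseteq> T \<and> shatters F1 Y} \<subseteq> Sh"
  proof
    fix Y' assume "Y' \<in> insert x ` {Y. Y \<subseteq> T \<and> shatters F1 Y}"
    then obtain Y where Y: "Y \<subseteq> T" "shatters F1 Y" "Y' = insert x Y" by blast
    have xY: "x \<notin> Y" using Y insert.hyps by auto
    have "shatters F (insert x Y)" unfolding shatters_def
    proof (intro allI impI)
      fix Z assume Z: "Z \<subseteq> insert x Y"
      have "Z - {x} \<subseteq> Y" using Z by auto
      then obtain B where B: "B \<in> F1" "B \<inter> Y = Z - {x}" using Y(2) unfolding shatters_def by blast
      have xB: "x \<notin> B" "B \<in> F" "insert x B \<in> F" using B insert.hyps unfolding F1_def by auto
      show "\<exists>B\<in>F. B \<inter> insert x Y = Z"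
      proof (cases "x \<in> Z")
        case True
        then have "insert x B \<inter> insert x Y = Z" using B(2) xB(1) xY by blast
        then show ?thesis using xB by blast
      next
        case False
        then have "B \<inter> insert x Y = Z" using B(2) xB(1) xY by blast
        then show ?thesis using xB by blast
      qed
    qed
    then show "Y' \<in> Sh" using Y unfolding Sh_def by auto
  qed
  have disj: "{Y. Y \<subseteq> T \<and> shatters F0 Y} \<inter> insert x ` {Y. Y \<subseteq> T \<and> shatters F1 Y} = {}"
  proof -
    have "\<And>Y. Y \<in> insert x ` {Y. Y \<subseteq> T \<and> shatters F1 Y} \<Longrightarrow> x \<in> Y" by blast
    moreover have "\<And>Y. Y \<in> {Y. Y \<subseteq> T \<and> shatters F0 Y} \<Longrightarrow> x \<notin> Y" using insert.hyps by blast
    ultimately show ?thesis by blast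
  qed
  have injx: "inj_on (insert x) {Y. Y \<subseteq> T \<and> shatters F1 Y}"
  proof (rule inj_onI)
    fix Y1 Y2 assume "Y1 \<in> {Y. Y \<subseteq> T \<and> shatters F1 Y}" "Y2 \<in> {Y. Y \<subseteq> T \<and> shatters F1 Y}" "insert x Y1 = insert x Y2"
    moreover have "x \<notin> Y1" "x \<notin> Y2" using insert.hyps calculation by blast+
    ultimately have "insert x Y1 - {x} = insert x Y2 - {x}" "x \<notin> Y1" "x \<notin> Y2" by simp_all
    then show "Y1 = Y2" by simp
  qed
  have finSh: "finite Sh"
  proof (rule finite_subset)
    show "Sh \<subseteq> Pow (insert x T)" unfolding Sh_def by blast
    show "finite (Pow (insert x T))" using insert.hyps by simp
  qed
  define S0 where "S0 = {Y. Y \<subseteq> T \<and> shatters F0 Y}"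
  define S1 where "S1 = {Y. Y \<subseteq> T \<and> shatters F1 Y}"
  have fS0: "finite S0" using finite_subset[OF s0 finSh] unfolding S0_def .
  have fS1: "finite (insert x ` S1)" using finite_subset[OF s1 finSh] unfolding S1_def .
  have "card F = card F0 + card F1" by (rule cF01)
  also have "\<dots> \<le> card S0 + card S1"
    using insert.IH[OF F0T] insert.IH[OF F1T] unfolding S0_def S1_def by linarith
  also have "card S1 = card (insert x ` S1)" using card_image[OF injx] unfolding S1_def by simp
  also have "card S0 + card (insert x ` S1) = card (S0 \<union> insert x ` S1)"
    using card_Un_disjoint[OF fS0 fS1] disj unfolding S0_def S1_def by simp
  also have "\<dots> \<le> card Sh" using s0 s1 finSh unfolding S0_def S1_def by (intro card_mono) blast+
  finally show ?case unfolding Sh_def .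
qed

lemma card_small_subsets:
  assumes "finite B"
  shows "card {G. G \<subseteq> B \<and> card G \<le> d} \<le> (card B + 1) ^ d"
proof -
  have "{G. G \<subseteq> B \<and> card G \<le> d} = (\<Union>i\<le>d. {G. G \<subseteq> B \<and> card G = i})" by auto
  then have "card {G. G \<subseteq> B \<and> card G \<le> d} \<le> (\<Sum>i\<le>d. card {G. G \<subseteq> B \<and> card G = i})"
    using card_UN_le[of "{..d}" "\<lambda>i. {G. G \<subseteq> B \<and> card G = i}"] by simp
  also have "\<dots> = (\<Sum>i\<le>d. card B choose i)" using n_subsets[OF assms] by simp
  also have "\<dots> \<le> (\<Sum>i\<le>d. (d choose i) * card B ^ i * 1 ^ (d - i))"
  proof (rule sum_mono)
    fix i assume "i \<in> {..d}"
    then have "i \<le> d" by simp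
    have "card B choose i \<le> card B ^ i"
      by (cases "i \<le> card B") (auto intro: binomial_le_pow simp: binomial_eq_0)
    also have "\<dots> \<le> (d choose i) * card B ^ i" using \<open>i \<le> d\<close> by (simp add: Suc_leI)
    finally show "card B choose i \<le> (d choose i) * card B ^ i * 1 ^ (d - i)" by simp
  qed
  also have "\<dots> = (card B + 1) ^ d" using binomial_ring[of "card B" 1 d] by simp
  finally show ?thesis .
qed

lemma lin_dep:
  fixes phi :: "nat \<Rightarrow> 'a \<Rightarrow> real"
  assumes "finite Y" "card Y > K"
  shows "\<exists>w. (\<exists>y\<in>Y. w y \<noteq> 0) \<and> (\<forall>j<K. (\<Sum>y\<in>Y. w y * phi j y) = 0)"
  using assms
proof (induction K arbitrary: Y phi)
  case 0
  then obtain y where "y \<in> Y" by fastforce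
  then show ?case by (intro exI[of _ "\<lambda>_. 1"]) auto
next
  case (Suc K)
  show ?case
  proof (cases "\<forall>y\<in>Y. phi K y = 0")
    case True
    obtain w where w: "\<exists>y\<in>Y. w y \<noteq> 0" "\<forall>j<K. (\<Sum>y\<in>Y. w y * phi j y) = 0"
      using Suc.IH[of Y phi] Suc.prems by auto
    have "\<forall>j<Suc K. (\<Sum>y\<in>Y. w y * phi j y) = 0"
    proof (intro allI impI)
      fix j assume "j < Suc K"
      then consider "j < K" | "j = K" by linarith
      then show "(\<Sum>y\<in>Y. w y * phi j y) = 0" using w True by cases auto
    qed
    then show ?thesis using w by blast
  next
    case False
    then obtain y0 where y0: "y0 \<in> Y" "phi K y0 \<noteq> 0" by auto
    define Y' where "Y' = Y - {y0}"
    have fY': "finite Y'" using Suc.prems unfolding Y'_def by auto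
    have cY': "card Y' > K" using Suc.prems y0 unfolding Y'_def by (simp add: card_Diff_singleton)
    define psi where "psi = (\<lambda>j y. phi j y - phi j y0 * phi K y / phi K y0)"
    obtain w' where w': "\<exists>y\<in>Y'. w' y \<noteq> 0" "\<forall>j<K. (\<Sum>y\<in>Y'. w' y * psi j y) = 0"
      using Suc.IH[OF fY' cY', of psi] by auto
    define s where "s = (\<Sum>y\<in>Y'. w' y * phi K y)"
    define w where "w = w'(y0 := - s / phi K y0)"
    have sumY: "(\<Sum>y\<in>Y. w y * phi j y) = w y0 * phi j y0 + (\<Sum>y\<in>Y'. w' y * phi j y)" for j
    proof -
      have "(\<Sum>y\<in>Y. w y * phi j y) = w y0 * phi j y0 + (\<Sum>y\<in>Y'. w y * phi j y)"
        unfolding Y'_def using Suc.prems y0 by (simp add: sum.remove)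
      also have "(\<Sum>y\<in>Y'. w y * phi j y) = (\<Sum>y\<in>Y'. w' y * phi j y)"
        unfolding w_def Y'_def by (intro sum.cong) auto
      finally show ?thesis .
    qed
    have "\<forall>j<Suc K. (\<Sum>y\<in>Y. w y * phi j y) = 0"
    proof (intro allI impI)
      fix j assume "j < Suc K"
      then consider "j < K" | "j = K" by linarith
      then show "(\<Sum>y\<in>Y. w y * phi j y) = 0"
      proof cases
        case 1
        have "(\<Sum>y\<in>Y'. w' y * psi j y) = (\<Sum>y\<in>Y'. w' y * phi j y) - phi j y0 / phi K y0 * s"
          unfolding psi_def s_def by (simp add: sum_subtractf sum_distrib_left algebra_simps)
        then have "(\<Sum>y\<in>Y'. w' y * phi j y) = phi j y0 / phi K y0 * s" using w'(2) 1 by simp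
        then show ?thesis using sumY[of j] y0 unfolding w_def by simp
      next
        case 2
        then show ?thesis using sumY[of j] y0 unfolding w_def s_def by simp
      qed
    qed
    moreover have "\<exists>y\<in>Y. w y \<noteq> 0" using w'(1) unfolding w_def Y'_def by auto
    ultimately show ?thesis by blast
  qed
qed

definition ball_tr :: "nat \<Rightarrow> (nat \<Rightarrow> real) set \<Rightarrow> (nat \<Rightarrow> real) set set" where
  "ball_tr D T = {{p\<in>T. edist D p c \<le> r} | c r. r \<ge> 0}"

definition phiD :: "nat \<Rightarrow> nat \<Rightarrow> (nat \<Rightarrow> real) \<Rightarrow> real" where
  "phiD D j p = (if j < D then p j else if j = D then 1 else (\<Sum>i<D. (p i)^2))"

lemma edist_le_iff:
  assumes "r \<ge> 0"
  shows "edist D p c \<le> r \<longleftrightarrow>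
    (\<Sum>i<D. (p i)^2) - 2 * (\<Sum>j<D. c j * p j) + ((\<Sum>i<D. (c i)^2) - r^2) \<le> 0"
proof -
  have e: "edist D p c = sqrt (\<Sum>i<D. (p i - c i)^2)" unfolding edist_def L2_set_def by simp
  have s: "(\<Sum>i<D. (p i - c i)^2) = (\<Sum>i<D. (p i)^2) - 2 * (\<Sum>j<D. c j * p j) + (\<Sum>i<D. (c i)^2)"
    by (simp add: power2_diff sum.distrib sum_subtractf sum_distrib_left algebra_simps)
  have "sqrt (\<Sum>i<D. (p i - c i)^2) \<le> r \<longleftrightarrow> (\<Sum>i<D. (p i - c i)^2) \<le> r^2"
  proof
    assume "sqrt (\<Sum>i<D. (p i - c i)^2) \<le> r" then show "(\<Sum>i<D. (p i - c i)^2) \<le> r^2" by (rule sqrt_le_D)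
  next
    assume "(\<Sum>i<D. (p i - c i)^2) \<le> r^2"
    then have "sqrt (\<Sum>i<D. (p i - c i)^2) \<le> sqrt (r^2)" by (rule real_sqrt_le_mono)
    then show "sqrt (\<Sum>i<D. (p i - c i)^2) \<le> r" using assms by simp
  qed
  then show ?thesis unfolding e s by linarith
qed

lemma ball_shatter_bound:
  assumes "finite Y" "shatters (ball_tr D T) Y" "Y \<subseteq> T"
  shows "card Y \<le> D + 2"
proof (rule ccontr)
  assume "\<not> card Y \<le> D + 2"
  then have "card Y > D + 2" by simp
  then obtain w where w: "\<exists>y\<in>Y. w y \<noteq> 0" "\<forall>j<D+2. (\<Sum>y\<in>Y. w y * phiD D j y) = 0"
    using lin_dep[OF assms(1)] by blast
  have main: False if v: "\<exists>y\<in>Y. v y > 0" "\<forall>j<D+2. (\<Sum>y\<in>Y. v y * phiD D j y) = 0" for v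
  proof -
    define Z where "Z = {y\<in>Y. v y \<le> 0}"
    have "Z \<subseteq> Y" unfolding Z_def by auto
    then obtain B where "B \<in> ball_tr D T" "B \<inter> Y = Z" using assms(2) unfolding shatters_def by blast
    then obtain c r where r: "r \<ge> 0" "{p\<in>T. edist D p c \<le> r} \<inter> Y = Z" unfolding ball_tr_def by blast
    define K where "K = (\<Sum>i<D. (c i)^2) - r^2"
    define g where "g p = (\<Sum>i<D. (p i)^2) - 2 * (\<Sum>j<D. c j * p j) + K" for p
    have gin: "g y \<le> 0 \<longleftrightarrow> v y \<le> 0" if "y \<in> Y" for y
    proof -
      have "g y \<le> 0 \<longleftrightarrow> edist D y c \<le> r" unfolding g_def K_def using edist_le_iff[OF r(1)] by simp
      also have "\<dots> \<longleftrightarrow> y \<in> {p\<in>T. edist D p c \<le> r} \<inter> Y" using that assms(3) by blast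
      also have "\<dots> \<longleftrightarrow> y \<in> Z" by (simp only: r(2))
      also have "\<dots> \<longleftrightarrow> v y \<le> 0" using that unfolding Z_def by simp
      finally show ?thesis .
    qed
    have nonneg: "0 \<le> v y * g y" if "y \<in> Y" for y
    proof (cases "v y \<le> 0")
      case True then have "g y \<le> 0" using gin[OF that] by simp
      then show ?thesis using True by (simp add: mult_nonpos_nonpos)
    next
      case False then have "g y > 0" using gin[OF that] by simp
      then show ?thesis using False by simp
    qed
    obtain y0 where y0: "y0 \<in> Y" "v y0 > 0" using v(1) by blast
    then have "g y0 > 0" using gin[OF y0(1)] by simp
    then have "0 < v y0 * g y0" using y0 by simp
    then have pos: "0 < (\<Sum>y\<in>Y. v y * g y)"
      using nonneg y0 assms(1) by (intro sum_pos2[where i=y0]) auto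
    have inner: "(\<Sum>j<D. c j * y j) = (\<Sum>j<D. c j * phiD D j y)" for y
      by (rule sum.cong) (auto simp: phiD_def)
    have pt: "v y * g y = v y * phiD D (D+1) y - 2 * (\<Sum>j<D. c j * (v y * phiD D j y)) + K * (v y * phiD D D y)" for y
    proof -
      have a: "phiD D (D+1) y = (\<Sum>i<D. (y i)^2)" by (simp add: phiD_def)
      have b: "phiD D D y = 1" by (simp add: phiD_def)
      have "(\<Sum>j<D. c j * (v y * phiD D j y)) = v y * (\<Sum>j<D. c j * phiD D j y)"
        by (simp add: sum_distrib_left mult.left_commute)
      then have c: "(\<Sum>j<D. c j * (v y * phiD D j y)) = v y * (\<Sum>j<D. c j * y j)" using inner[of y] by simp
      show ?thesis unfolding a b c g_def by (simp add: algebra_simps)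
    qed
    have "(\<Sum>y\<in>Y. v y * g y) = (\<Sum>y\<in>Y. v y * phiD D (D+1) y) - 2 * (\<Sum>y\<in>Y. \<Sum>j<D. c j * (v y * phiD D j y)) + K * (\<Sum>y\<in>Y. v y * phiD D D y)"
      unfolding pt by (simp add: sum.distrib sum_subtractf sum_distrib_left)
    also have "(\<Sum>y\<in>Y. \<Sum>j<D. c j * (v y * phiD D j y)) = (\<Sum>j<D. c j * (\<Sum>y\<in>Y. v y * phiD D j y))"
      by (subst sum.swap) (simp add: sum_distrib_left)
    also have "\<dots> = 0" using v(2) by simp
    finally have "(\<Sum>y\<in>Y. v y * g y) = 0" using v(2) by simp
    then show False using pos by simp
  qed
  show False
  proof (cases "\<exists>y\<in>Y. w y > 0")
    case True then show ?thesis using main[of w] w by blast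
  next
    case False
    obtain y where "y \<in> Y" "w y \<noteq> 0" using w(1) by blast
    then have "- w y > 0" using False by auto
    then have "\<exists>y\<in>Y. - w y > 0" using \<open>y \<in> Y\<close> by blast
    moreover have "\<forall>j<D+2. (\<Sum>y\<in>Y. (- w y) * phiD D j y) = 0" using w(2) by (simp add: sum_negf)
    ultimately show ?thesis using main[of "\<lambda>y. - w y"] by blast
  qed
qed

lemma card_ball_tr:
  assumes "finite T"
  shows "card (ball_tr D T) \<le> (card T + 1) ^ (D + 2)"
proof -
  have sub: "ball_tr D T \<subseteq> Pow T" unfolding ball_tr_def by auto
  have "card (ball_tr D T) \<le> card {Y. Y \<subseteq> T \<and> shatters (ball_tr D T) Y}"
    by (rule pajor[OF assms sub])
  also have "\<dots> \<le> card {G. G \<subseteq> T \<and> card G \<le> D + 2}"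
  proof (rule card_mono)
    show "finite {G. G \<subseteq> T \<and> card G \<le> D + 2}" by (rule finite_subset[of _ "Pow T"]) (use assms in auto)
    show "{Y. Y \<subseteq> T \<and> shatters (ball_tr D T) Y} \<subseteq> {G. G \<subseteq> T \<and> card G \<le> D + 2}"
    proof
      fix Y assume "Y \<in> {Y. Y \<subseteq> T \<and> shatters (ball_tr D T) Y}"
      then have Y: "Y \<subseteq> T" "shatters (ball_tr D T) Y" by auto
      have "finite Y" using Y(1) assms by (rule finite_subset)
      then have "card Y \<le> D + 2" using ball_shatter_bound Y by blast
      then show "Y \<in> {G. G \<subseteq> T \<and> card G \<le> D + 2}" using Y by simp
    qed
  qed
  also have "\<dots> \<le> (card T + 1) ^ (D + 2)" by (rule card_small_subsets[OF assms])
  finally show ?thesis .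
qed

definition rng :: "nat \<Rightarrow> (nat \<Rightarrow> real) set \<Rightarrow> real \<Rightarrow> (nat \<Rightarrow> real) set" where
  "rng D E r = {p. \<exists>c\<in>E. edist D p c \<le> r}"

definition trk :: "nat \<Rightarrow> nat \<Rightarrow> (nat \<Rightarrow> real) set \<Rightarrow> (nat \<Rightarrow> real) set set" where
  "trk D k T = {T \<inter> rng D E r | E r. centers D k E \<and> r \<ge> 0}"

lemma trk_bound:
  assumes "finite T"
  shows "finite (trk D k T)" "card (trk D k T) \<le> ((card T + 1) ^ (D + 2) + 1) ^ k"
proof -
  show "finite (trk D k T)" unfolding trk_def by (rule finite_subset[of _ "Pow T"]) (use assms in auto)
  define BT where "BT = ball_tr D T"
  have fBT: "finite BT" unfolding BT_def ball_tr_def by (rule finite_subset[of _ "Pow T"]) (use assms in auto)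
  have sub: "trk D k T \<subseteq> Union ` {G. G \<subseteq> BT \<and> card G \<le> k}"
  proof
    fix X assume "X \<in> trk D k T"
    then obtain E r where Er: "centers D k E" "r \<ge> 0" "X = T \<inter> rng D E r" unfolding trk_def by blast
    define G where "G = (\<lambda>c. {p\<in>T. edist D p c \<le> r}) ` E"
    have "X = \<Union> G" unfolding G_def Er(3) rng_def by blast
    moreover have "G \<subseteq> BT" unfolding G_def BT_def ball_tr_def using Er(2) by auto
    moreover have "card G \<le> k" unfolding G_def using Er(1) unfolding centers_def
      by (meson card_image_le order_trans)
    ultimately show "X \<in> Union ` {G. G \<subseteq> BT \<and> card G \<le> k}" by blast
  qed
  have fG: "finite {G. G \<subseteq> BT \<and> card G \<le> k}" by (rule finite_subset[of _ "Pow BT"]) (use fBT in auto)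
  have "card (trk D k T) \<le> card (Union ` {G. G \<subseteq> BT \<and> card G \<le> k})"
    using sub fG by (intro card_mono) auto
  also have "\<dots> \<le> card {G. G \<subseteq> BT \<and> card G \<le> k}" using fG by (rule card_image_le)
  also have "\<dots> \<le> (card BT + 1) ^ k" by (rule card_small_subsets[OF fBT])
  also have "\<dots> \<le> ((card T + 1) ^ (D + 2) + 1) ^ k"
    using card_ball_tr[OF assms, of D] unfolding BT_def by (intro power_mono) auto
  finally show "card (trk D k T) \<le> ((card T + 1) ^ (D + 2) + 1) ^ k" .
qed

definition Bad2 :: "nat \<Rightarrow> nat \<Rightarrow> (nat \<Rightarrow> real) set \<Rightarrow> nat \<Rightarrow> real \<Rightarrow> real \<Rightarrow> (nat \<Rightarrow> real) set set" where
  "Bad2 D k P m x y = {S\<in>msub P m. \<exists>E r. centers D k E \<and> r \<ge> 0 \<and>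
      real (card (S - rng D E r)) \<le> x \<and> y < real (card (P - rng D E r))}"

lemma card_filter_sum:
  assumes "finite A"
  shows "real (card {a\<in>A. Q a}) = (\<Sum>a\<in>A. if Q a then 1 else 0)"
proof -
  have "{a\<in>A. Q a} = Collect Q \<inter> A" by auto
  then show ?thesis using sum_ind_card[OF assms, of "Collect Q"] by simp
qed

lemma bad2_direct:
  assumes "finite P" "card P > 0" "m \<le> card P" "0 \<le> x" "x \<le> y * m / card P" "0 < y * m / card P"
  shows "real (card (Bad2 D k P m x y)) \<le> real (card (trk D k P)) *
           (real (card P choose m) * exp (- ((y * m / card P - x)^2 / (4 * (y * m / card P)))))"
proof -
  define mu where "mu = y * m / card P"
  define bnd where "bnd = real (card P choose m) * exp (- ((mu - x)^2 / (4 * mu)))"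
  define H where "H = (\<lambda>Tr. {S\<in>msub P m. real (card (S \<inter> (P - Tr))) \<le> x \<and> y < real (card (P - Tr))})"
  have fT: "finite (trk D k P)" using trk_bound[OF assms(1)] by blast
  have sub: "Bad2 D k P m x y \<subseteq> (\<Union>Tr\<in>trk D k P. H Tr)"
  proof
    fix S assume "S \<in> Bad2 D k P m x y"
    then obtain E r where S: "S \<in> msub P m" "centers D k E" "r \<ge> 0"
      "real (card (S - rng D E r)) \<le> x" "y < real (card (P - rng D E r))"
      unfolding Bad2_def by blast
    define Tr where "Tr = P \<inter> rng D E r"
    have T: "Tr \<in> trk D k P" unfolding Tr_def trk_def using S by blast
    have e1: "S \<inter> (P - Tr) = S - rng D E r" using S(1) unfolding Tr_def msub_def by blast
    have e2: "P - Tr = P - rng D E r" unfolding Tr_def by blast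
    have e3: "card (S \<inter> (P - rng D E r)) = card (S - rng D E r)" using e1 e2 by simp
    have "S \<in> H Tr" unfolding H_def e2 using S e3 by simp
    then show "S \<in> (\<Union>Tr\<in>trk D k P. H Tr)" using T by blast
  qed
  have each: "real (card (H Tr)) \<le> bnd" for Tr
  proof (cases "y < real (card (P - Tr))")
    case False
    then have "H Tr = {}" unfolding H_def by auto
    then show ?thesis unfolding bnd_def by simp
  next
    case True
    have "H Tr \<subseteq> {S\<in>msub P m. real (card (S \<inter> (P - Tr))) \<le> x}" unfolding H_def by auto
    then have "card (H Tr) \<le> card {S\<in>msub P m. real (card (S \<inter> (P - Tr))) \<le> x}"
      using finite_msub[OF assms(1)] by (intro card_mono) auto
    also have "real \<dots> \<le> bnd" unfolding bnd_def
    proof (rule chernoff_lower[OF assms(1) _ assms(2,3)])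
      show "P - Tr \<subseteq> P" by auto
      have "y * real m \<le> real (card (P - Tr)) * real m" using True by (intro mult_right_mono) auto
      then show "mu \<le> real (card (P - Tr)) * real m / real (card P)" unfolding mu_def
        by (simp add: divide_right_mono)
      show "0 < mu" "0 \<le> x" "x \<le> mu" using assms unfolding mu_def by auto
    qed
    finally show ?thesis by simp
  qed
  have "card (Bad2 D k P m x y) \<le> card (\<Union>Tr\<in>trk D k P. H Tr)"
    using sub fT finite_msub[OF assms(1)] unfolding H_def by (intro card_mono) auto
  also have "\<dots> \<le> (\<Sum>Tr\<in>trk D k P. card (H Tr))" by (rule card_UN_le[OF fT])
  finally have "real (card (Bad2 D k P m x y)) \<le> (\<Sum>Tr\<in>trk D k P. real (card (H Tr)))"
    by (metis of_nat_le_iff of_nat_sum)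
  also have "\<dots> \<le> (\<Sum>Tr\<in>trk D k P. bnd)" using each by (intro sum_mono) auto
  also have "\<dots> = real (card (trk D k P)) * bnd" by simp
  finally show ?thesis unfolding bnd_def mu_def .
qed

lemma kappa_alg:
  fixes a x x' :: real
  assumes "0 \<le> x" "x < x'" "x' \<le> a"
  shows "x' * (x' - x)^2 / (8 * (x + x')^2) \<le> (a / 2 - a * x / (x + x'))^2 / (4 * (a / 2))"
proof -
  have pos: "x + x' > 0" using assms by auto
  have apos: "a > 0" using assms by auto
  have e1: "a / 2 - a * x / (x + x') = a * (x' - x) / (2 * (x + x'))" using pos by (simp add: field_simps)
  have gen: "(a * d / (2 * s))^2 / (4 * (a / 2)) = a * d^2 / (8 * s^2)" if "s > 0" for s d :: real
    using that apos by (simp add: field_simps power2_eq_square)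
  have e2: "(a * (x' - x) / (2 * (x + x')))^2 / (4 * (a / 2)) = a * (x' - x)^2 / (8 * (x + x')^2)"
    by (rule gen[OF pos])
  have "(a / 2 - a * x / (x + x'))^2 / (4 * (a / 2)) = a * (x' - x)^2 / (8 * (x + x')^2)"
    unfolding e1 by (rule e2)
  moreover have "x' * (x' - x)^2 / (8 * (x + x')^2) \<le> a * (x' - x)^2 / (8 * (x + x')^2)"
    using assms pos by (intro divide_right_mono mult_right_mono) auto
  ultimately show ?thesis by simp
qed

lemma bad2_sym:
  assumes P: "finite P" and m2: "2 * m \<le> card P" and m0: "0 < m"
    and x0: "0 \<le> x" and xx: "x < x'" and mu1: "0 < mu1" "x' \<le> mu1"
    and mucond: "mu1 * (real (card P) - real m) \<le> (y - x) * real m"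
    and half: "exp (- ((mu1 - x')^2 / (4 * mu1))) \<le> 1/2"
    and tau: "\<And>T. T \<subseteq> P \<Longrightarrow> card T = 2 * m \<Longrightarrow> real (card (trk D k T)) \<le> tau"
  shows "real (card (Bad2 D k P m x y)) \<le> 2 * tau * real (card P choose m) * exp (- (x' * (x' - x)^2 / (8 * (x + x')^2)))"
proof -
  define N where "N = card P"
  define kap where "kap = x' * (x' - x)^2 / (8 * (x + x')^2)"
  define Ts where "Ts = msub P (2 * m)"
  define Gp where "Gp = (\<lambda>S T. \<exists>E r. centers D k E \<and> r \<ge> 0 \<and> real (card (S - rng D E r)) \<le> x \<and>
                              x' \<le> real (card ((T - S) - rng D E r)))"
  define Bd where "Bd = Bad2 D k P m x y"
  define CC where "CC = real ((N - m) choose m)"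
  have fTs: "finite Ts" unfolding Ts_def using finite_msub[OF P] .
  have fMs: "finite (msub P m)" using finite_msub[OF P] .
  have BdM: "Bd \<subseteq> msub P m" unfolding Bd_def Bad2_def by auto
  have fBd: "finite Bd" using BdM fMs finite_subset by blast
  have CCpos: "CC > 0" unfolding CC_def N_def using m2 by simp
  have stepa: "CC / 2 \<le> real (card {T\<in>Ts. S \<subseteq> T \<and> Gp S T})" if S: "S \<in> Bd" for S
  proof -
    from S obtain E r where Sm: "S \<subseteq> P" "card S = m" and E: "centers D k E" "r \<ge> 0"
       "real (card (S - rng D E r)) \<le> x" "y < real (card (P - rng D E r))"
       unfolding Bd_def Bad2_def msub_def by blast
    define R where "R = rng D E r"
    define U where "U = P - S"
    define B where "B = U - R"
    have fS: "finite S" using Sm P finite_subset by blast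
    have fU: "finite U" unfolding U_def using P by simp
    have cU: "card U = N - m" unfolding U_def N_def using Sm P by (simp add: card_Diff_subset fS)
    have BU: "B \<subseteq> U" unfolding B_def by auto
    have cPR: "card (P - R) = card B + card (S - R)"
    proof -
      have "P - R = B \<union> (S - R)" "B \<inter> (S - R) = {}" unfolding B_def U_def using Sm by auto
      moreover have "finite B" "finite (S - R)" using fU BU fS finite_subset by auto
      ultimately show ?thesis by (simp add: card_Un_disjoint)
    qed
    have cB: "real (card B) > y - x" using cPR E(3,4) unfolding R_def by simp
    have Nm: "real N - real m > 0" using m2 m0 unfolding N_def by auto
    have cUr: "real (card U) = real N - real m" using cU m2 unfolding N_def by (simp add: of_nat_diff)
    have mub: "mu1 \<le> real (card B) * real m / real (card U)"
    proof -
      have "mu1 * (real N - real m) \<le> (y - x) * real m" using mucond unfolding N_def .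
      also have "\<dots> \<le> real (card B) * real m" using cB m0 by (intro mult_right_mono) auto
      finally have "mu1 * real (card U) \<le> real (card B) * real m" unfolding cUr .
      moreover have "real (card U) > 0" using Nm cUr by simp
      ultimately show ?thesis by (simp add: pos_le_divide_eq)
    qed
    have cUpos: "card U > 0" using cU m2 m0 unfolding N_def by simp
    have mU: "m \<le> card U" using cU m2 unfolding N_def by simp
    have low: "real (card {S'\<in>msub U m. real (card (S' \<inter> B)) \<le> x'}) \<le> CC * (1/2)"
    proof -
      have "real (card {S'\<in>msub U m. real (card (S' \<inter> B)) \<le> x'}) \<le> real (card U choose m) * exp (- ((mu1 - x')^2 / (4 * mu1)))"
        using chernoff_lower[OF fU BU cUpos mU mub mu1(1) _ mu1(2)] xx x0 by simp
      also have "\<dots> \<le> real (card U choose m) * (1/2)" using half by (intro mult_left_mono) auto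
      finally show ?thesis unfolding CC_def cU .
    qed
    define G1 where "G1 = {S'\<in>msub U m. real (card (S' \<inter> B)) \<le> x'}"
    define G2 where "G2 = {S'\<in>msub U m. x' \<le> real (card (S' \<inter> B))}"
    have cover: "msub U m \<subseteq> G1 \<union> G2" unfolding G1_def G2_def by auto
    have fG: "finite G1" "finite G2" unfolding G1_def G2_def using finite_msub[OF fU] by auto
    have "CC = real (card (msub U m))" unfolding CC_def using card_msub[OF fU] cU by simp
    also have "card (msub U m) \<le> card (G1 \<union> G2)" using cover fG by (intro card_mono) auto
    also have "\<dots> \<le> card G1 + card G2" by (rule card_Un_le)
    finally have "CC \<le> real (card G1) + real (card G2)" by simp
    then have hi: "CC / 2 \<le> real (card G2)" using low unfolding G1_def by linarith
    have inj: "inj_on (\<lambda>S'. S \<union> S') G2"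
    proof (rule inj_onI)
      fix S1 S2 assume "S1 \<in> G2" "S2 \<in> G2" "S \<union> S1 = S \<union> S2"
      moreover have "S1 \<subseteq> U" "S2 \<subseteq> U" using calculation unfolding G2_def msub_def by auto
      ultimately have "(S \<union> S1) - S = S1" "(S \<union> S2) - S = S2" "S \<union> S1 = S \<union> S2" unfolding U_def by auto
      then show "S1 = S2" by metis
    qed
    have img: "(\<lambda>S'. S \<union> S') ` G2 \<subseteq> {T\<in>Ts. S \<subseteq> T \<and> Gp S T}"
    proof
      fix T assume "T \<in> (\<lambda>S'. S \<union> S') ` G2"
      then obtain S' where S': "S' \<subseteq> U" "card S' = m" "x' \<le> real (card (S' \<inter> B))" "T = S \<union> S'"
        unfolding G2_def msub_def by blast
      have fS': "finite S'" using S'(1) fU finite_subset by blast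
      have dj: "S \<inter> S' = {}" using S'(1) unfolding U_def by auto
      have "card T = 2 * m" unfolding S'(4) using card_Un_disjoint[OF fS fS' dj] Sm S' by simp
      moreover have "T \<subseteq> P" using S'(1,4) Sm unfolding U_def by auto
      moreover have "(T - S) - R = S' \<inter> B" using S'(1,4) dj unfolding B_def by auto
      then have "x' \<le> real (card ((T - S) - rng D E r))" using S'(3) unfolding R_def by simp
      then have "Gp S T" unfolding Gp_def using E(1,2,3) by blast
      ultimately show "T \<in> {T\<in>Ts. S \<subseteq> T \<and> Gp S T}"
        unfolding Ts_def msub_def using S'(4) by auto
    qed
    have fin: "finite {T\<in>Ts. S \<subseteq> T \<and> Gp S T}" using fTs by simp
    have "card G2 = card ((\<lambda>S'. S \<union> S') ` G2)" using card_image[OF inj] by simp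
    also have "\<dots> \<le> card {T\<in>Ts. S \<subseteq> T \<and> Gp S T}" using img fin by (rule card_mono[rotated])
    finally show ?thesis using hi by linarith
  qed
  have stepb: "(\<Sum>S\<in>Bd. real (card {T\<in>Ts. S \<subseteq> T \<and> Gp S T})) \<le> (\<Sum>T\<in>Ts. real (card {S\<in>msub T m. Gp S T}))"
  proof -
    have "(\<Sum>S\<in>Bd. real (card {T\<in>Ts. S \<subseteq> T \<and> Gp S T})) = (\<Sum>S\<in>Bd. \<Sum>T\<in>Ts. if S \<subseteq> T \<and> Gp S T then 1 else 0)"
      using card_filter_sum[OF fTs] by simp
    also have "\<dots> \<le> (\<Sum>S\<in>msub P m. \<Sum>T\<in>Ts. if S \<subseteq> T \<and> Gp S T then 1 else 0)"
      using BdM fMs by (intro sum_mono2) (auto intro: sum_nonneg)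
    also have "\<dots> = (\<Sum>T\<in>Ts. \<Sum>S\<in>msub P m. if S \<subseteq> T \<and> Gp S T then 1 else 0)" by (rule sum.swap)
    also have "\<dots> = (\<Sum>T\<in>Ts. real (card {S\<in>msub P m. S \<subseteq> T \<and> Gp S T}))"
      using card_filter_sum[OF fMs] by simp
    also have "\<dots> = (\<Sum>T\<in>Ts. real (card {S\<in>msub T m. Gp S T}))"
    proof (rule sum.cong[OF refl])
      fix T assume "T \<in> Ts"
      then have "T \<subseteq> P" unfolding Ts_def msub_def by auto
      then have "{S\<in>msub P m. S \<subseteq> T \<and> Gp S T} = {S\<in>msub T m. Gp S T}" unfolding msub_def by auto
      then show "real (card {S\<in>msub P m. S \<subseteq> T \<and> Gp S T}) = real (card {S\<in>msub T m. Gp S T})" by simp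
    qed
    finally show ?thesis .
  qed
  have stepc: "real (card {S\<in>msub T m. Gp S T}) \<le> tau * (real ((2 * m) choose m) * exp (- kap))" if T: "T \<in> Ts" for T
  proof -
    have TP: "T \<subseteq> P" "card T = 2 * m" using T unfolding Ts_def msub_def by auto
    have fT: "finite T" using TP P finite_subset by blast
    define H where "H = (\<lambda>Tr. {S\<in>msub T m. real (card (S \<inter> (T - Tr))) \<le> real (card (T - Tr)) * x / (x + x')
                                  \<and> x' \<le> real (card (T - Tr))})"
    have sub: "{S\<in>msub T m. Gp S T} \<subseteq> (\<Union>Tr\<in>trk D k T. H Tr)"
    proof
      fix S assume "S \<in> {S\<in>msub T m. Gp S T}"
      then obtain E r where S: "S \<subseteq> T" "card S = m" "centers D k E" "r \<ge> 0"
        "real (card (S - rng D E r)) \<le> x" "x' \<le> real (card ((T - S) - rng D E r))"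
        unfolding msub_def Gp_def by blast
      define Tr where "Tr = T \<inter> rng D E r"
      define A where "A = T - Tr"
      have Tr: "Tr \<in> trk D k T" unfolding Tr_def trk_def using S by blast
      have eA: "A = T - rng D E r" unfolding A_def Tr_def by blast
      have e1: "S \<inter> A = S - rng D E r" using S(1) unfolding eA by blast
      have e2: "A - S = (T - S) - rng D E r" unfolding eA by blast
      have fA: "finite A" unfolding A_def using fT by simp
      have cc: "card A = card (S \<inter> A) + card (A - S)"
      proof -
        have "A = (S \<inter> A) \<union> (A - S)" "(S \<inter> A) \<inter> (A - S) = {}" by auto
        then show ?thesis using fA by (metis card_Un_disjoint finite_Diff finite_Int)
      qed
      define c where "c = real (card (S \<inter> A))"
      define a where "a = real (card A)"
      have c1: "c \<le> x" unfolding c_def e1 using S(5) .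
      have c2: "x' \<le> a - c" unfolding a_def c_def using cc e2 S(6) by simp
      have h1: "c * x' \<le> x * x'" using c1 xx x0 by (intro mult_right_mono) auto
      have h2: "x * x' \<le> x * (a - c)" using c2 x0 by (intro mult_left_mono) auto
      have "c * (x + x') \<le> a * x" using h1 h2 by (simp add: algebra_simps)
      then have c3: "c \<le> a * x / (x + x')" using xx x0 by (simp add: field_simps)
      have c0: "0 \<le> c" unfolding c_def by simp
      have "S \<in> H Tr" unfolding H_def using S(1,2) c3 c2 c0 unfolding msub_def a_def c_def A_def by auto
      then show "S \<in> (\<Union>Tr\<in>trk D k T. H Tr)" using Tr by blast
    qed
    have each: "real (card (H Tr)) \<le> real ((2 * m) choose m) * exp (- kap)" for Tr
    proof (cases "x' \<le> real (card (T - Tr))")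
      case False
      then have "H Tr = {}" unfolding H_def by auto
      then show ?thesis by simp
    next
      case True
      define a where "a = real (card (T - Tr))"
      have apos: "0 < a" using True xx x0 unfolding a_def by linarith
      have "H Tr \<subseteq> {S\<in>msub T m. real (card (S \<inter> (T - Tr))) \<le> a * x / (x + x')}" unfolding H_def a_def by auto
      then have "card (H Tr) \<le> card {S\<in>msub T m. real (card (S \<inter> (T - Tr))) \<le> a * x / (x + x')}"
        using finite_msub[OF fT] by (intro card_mono) auto
      also have "real \<dots> \<le> real (card T choose m) * exp (- ((a / 2 - a * x / (x + x'))^2 / (4 * (a / 2))))"
      proof (rule chernoff_lower[OF fT])
        show "T - Tr \<subseteq> T" by auto
        show "0 < card T" "m \<le> card T" using TP m0 by auto
        show "a / 2 \<le> real (card (T - Tr)) * real m / real (card T)" using TP m0 unfolding a_def by simp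
        show "0 < a / 2" using apos by simp
        show "0 \<le> a * x / (x + x')" using apos x0 xx by simp
        have "x / (x + x') \<le> 1 / 2" using x0 xx by (simp add: field_simps)
        then have "a * (x / (x + x')) \<le> a * (1 / 2)" using apos by (intro mult_left_mono) auto
        then show "a * x / (x + x') \<le> a / 2" by simp
      qed
      also have "\<dots> \<le> real ((2 * m) choose m) * exp (- kap)"
        using kappa_alg[OF x0 xx True] TP unfolding kap_def a_def by simp
      finally show ?thesis by simp
    qed
    have ftr: "finite (trk D k T)" using trk_bound[OF fT] by blast
    have "card {S\<in>msub T m. Gp S T} \<le> card (\<Union>Tr\<in>trk D k T. H Tr)"
      using sub ftr finite_msub[OF fT] unfolding H_def by (intro card_mono) auto
    also have "\<dots> \<le> (\<Sum>Tr\<in>trk D k T. card (H Tr))" by (rule card_UN_le[OF ftr])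
    finally have "real (card {S\<in>msub T m. Gp S T}) \<le> (\<Sum>Tr\<in>trk D k T. real (card (H Tr)))"
      by (metis of_nat_le_iff of_nat_sum)
    also have "\<dots> \<le> (\<Sum>Tr\<in>trk D k T. real ((2 * m) choose m) * exp (- kap))" using each by (intro sum_mono) auto
    also have "\<dots> = real (card (trk D k T)) * (real ((2 * m) choose m) * exp (- kap))" by simp
    also have "\<dots> \<le> tau * (real ((2 * m) choose m) * exp (- kap))"
      using tau[OF TP] by (intro mult_right_mono) auto
    finally show ?thesis .
  qed
  have "real (card Bd) * (CC / 2) = (\<Sum>S\<in>Bd. CC / 2)" by simp
  also have "\<dots> \<le> (\<Sum>S\<in>Bd. real (card {T\<in>Ts. S \<subseteq> T \<and> Gp S T}))" using stepa by (intro sum_mono) auto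
  also have "\<dots> \<le> (\<Sum>T\<in>Ts. real (card {S\<in>msub T m. Gp S T}))" by (rule stepb)
  also have "\<dots> \<le> (\<Sum>T\<in>Ts. tau * (real ((2 * m) choose m) * exp (- kap)))" using stepc by (intro sum_mono) auto
  also have "\<dots> = tau * exp (- kap) * (real (card Ts) * real ((2 * m) choose m))" by (simp add: algebra_simps)
  also have "real (card Ts) * real ((2 * m) choose m) = real (N choose m) * CC"
  proof -
    have "card Ts = N choose (2 * m)" unfolding Ts_def N_def by (rule card_msub[OF P])
    moreover have "(N choose (2 * m)) * ((2 * m) choose m) = (N choose m) * ((N - m) choose (2 * m - m))"
      using m2 unfolding N_def by (intro choose_mult) auto
    moreover have "2 * m - m = m" by simp
    ultimately show ?thesis unfolding CC_def by (metis of_nat_mult)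
  qed
  finally have "real (card Bd) * (CC / 2) \<le> (2 * tau * real (N choose m) * exp (- kap)) * (CC / 2)"
    by (simp add: algebra_simps)
  then have "real (card Bd) \<le> 2 * tau * real (N choose m) * exp (- kap)" using CCpos by simp
  then show ?thesis unfolding Bd_def N_def kap_def .
qed

lemma edist_nonneg: "0 \<le> edist D p c" unfolding edist_def by simp

lemma cover_cost_nonneg:
  assumes "finite A" "A \<noteq> {}" "finite Q"
  shows "0 \<le> cover_cost D A Q"
proof (cases "Q = {}")
  case True then show ?thesis unfolding cover_cost_def by simp
next
  case False
  then obtain p where p: "p \<in> Q" by blast
  have "Min ((\<lambda>c. edist D p c) ` A) \<in> (\<lambda>c. edist D p c) ` A" using assms by (intro Min_in) auto
  then have "0 \<le> Min ((\<lambda>c. edist D p c) ` A)" using edist_nonneg by auto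
  also have "\<dots> \<le> Max ((\<lambda>p. Min ((\<lambda>c. edist D p c) ` A)) ` Q)" using assms p by (intro Max_ge) auto
  finally show ?thesis unfolding cover_cost_def using False by simp
qed

lemma cover_cost_mono:
  assumes "finite A" "A \<noteq> {}" "finite Q2" "Q1 \<subseteq> Q2"
  shows "cover_cost D A Q1 \<le> cover_cost D A Q2"
proof (cases "Q1 = {}")
  case True then show ?thesis using cover_cost_nonneg[OF assms(1-3)] unfolding cover_cost_def by simp
next
  case False
  then have "Q2 \<noteq> {}" using assms by auto
  moreover have "Max ((\<lambda>p. Min ((\<lambda>c. edist D p c) ` A)) ` Q1) \<le> Max ((\<lambda>p. Min ((\<lambda>c. edist D p c) ` A)) ` Q2)"
    using assms False by (intro Max_mono) auto
  ultimately show ?thesis unfolding cover_cost_def using False by simp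
qed

lemma cover_cost_le:
  assumes "finite A" "A \<noteq> {}" "finite Q" "\<And>p. p \<in> Q \<Longrightarrow> \<exists>c\<in>A. edist D p c \<le> r" "0 \<le> r"
  shows "cover_cost D A Q \<le> r"
proof (cases "Q = {}")
  case True then show ?thesis unfolding cover_cost_def using assms by simp
next
  case False
  have "Max ((\<lambda>p. Min ((\<lambda>c. edist D p c) ` A)) ` Q) \<le> r"
  proof (subst Max_le_iff)
    show "finite ((\<lambda>p. Min ((\<lambda>c. edist D p c) ` A)) ` Q)" using assms by simp
    show "(\<lambda>p. Min ((\<lambda>c. edist D p c) ` A)) ` Q \<noteq> {}" using False by simp
    show "\<forall>a\<in>(\<lambda>p. Min ((\<lambda>c. edist D p c) ` A)) ` Q. a \<le> r"
    proof
      fix a assume "a \<in> (\<lambda>p. Min ((\<lambda>c. edist D p c) ` A)) ` Q"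
      then obtain p where p: "p \<in> Q" "a = Min ((\<lambda>c. edist D p c) ` A)" by blast
      obtain c where c: "c \<in> A" "edist D p c \<le> r" using assms(4)[OF p(1)] by blast
      have "a \<le> edist D p c" unfolding p(2) using assms c by (intro Min_le) auto
      then show "a \<le> r" using c by simp
    qed
  qed
  then show ?thesis unfolding cover_cost_def using False by simp
qed

lemma covered_in_rng:
  assumes "finite A" "A \<noteq> {}" "finite Q"
  shows "Q \<subseteq> rng D A (cover_cost D A Q)"
proof
  fix p assume p: "p \<in> Q"
  then have ne: "Q \<noteq> {}" by auto
  have "Min ((\<lambda>c. edist D p c) ` A) \<in> (\<lambda>c. edist D p c) ` A" using assms by (intro Min_in) auto
  then obtain c where c: "c \<in> A" "edist D p c = Min ((\<lambda>c. edist D p c) ` A)" by auto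
  have "Min ((\<lambda>c. edist D p c) ` A) \<le> Max ((\<lambda>p. Min ((\<lambda>c. edist D p c) ` A)) ` Q)"
    using assms p by (intro Max_ge) auto
  then have "edist D p c \<le> cover_cost D A Q" unfolding cover_cost_def using ne c by simp
  then show "p \<in> rng D A (cover_cost D A Q)" unfolding rng_def using c by blast
qed

lemma centers_exist: "k \<ge> 1 \<Longrightarrow> centers D k {\<lambda>_. 0}"
  unfolding centers_def RD_def by auto

lemma Q0_exists:
  assumes P: "finite P" and k: "k \<ge> 1" and w: "(w::real) \<ge> 0"
  shows "\<exists>Q0. Q0 \<subseteq> P \<and> real (card P) - w \<le> real (card Q0) \<and>
     (\<forall>eta>0. \<exists>A. centers D k A \<and> cover_cost D A Q0 \<le> r_opt D k P w + eta)"
proof (rule ccontr)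
  define QQ where "QQ = {Q'. Q' \<subseteq> P \<and> real (card P) - w \<le> real (card Q')}"
  define Vals where "Vals = {cover_cost D A Q' | A Q'. centers D k A \<and> Q' \<subseteq> P \<and> real (card Q') \<ge> real (card P) - w}"
  have rdef: "r_opt D k P w = Inf Vals" unfolding r_opt_def Vals_def by simp
  assume "\<not> ?thesis"
  then have "\<forall>Q\<in>QQ. \<exists>eta>0. \<forall>A. centers D k A \<longrightarrow> r_opt D k P w + eta < cover_cost D A Q"
    unfolding QQ_def by (auto simp: not_le)
  then obtain f where f: "\<forall>Q\<in>QQ. f Q > 0 \<and> (\<forall>A. centers D k A \<longrightarrow> r_opt D k P w + f Q < cover_cost D A Q)"
    by metis
  have fQQ: "finite QQ" unfolding QQ_def by (rule finite_subset[of _ "Pow P"]) (use P in auto)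
  have PQQ: "P \<in> QQ" unfolding QQ_def using w by auto
  define e0 where "e0 = Min (f ` QQ)"
  have e0pos: "e0 > 0" unfolding e0_def using fQQ PQQ f by (subst Min_gr_iff) auto
  have "real (card P) - w \<le> real (card P)" using w by simp
  then have "cover_cost D {\<lambda>_. 0} P \<in> Vals" unfolding Vals_def using centers_exist[OF k, of D] by blast
  then have Vne: "Vals \<noteq> {}" by auto
  have "r_opt D k P w + e0 \<le> Inf Vals"
  proof (rule cInf_greatest[OF Vne])
    fix v assume "v \<in> Vals"
    then obtain A Q' where AQ: "v = cover_cost D A Q'" "centers D k A" "Q' \<in> QQ" unfolding Vals_def QQ_def by blast
    have "e0 \<le> f Q'" unfolding e0_def using fQQ AQ(3) by (intro Min_le) auto
    then show "r_opt D k P w + e0 \<le> v" using f AQ by fastforce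
  qed
  then show False using e0pos rdef by simp
qed

lemma transfer:
  fixes w eps C alpha :: real
  assumes P: "finite P" and SP: "S \<subseteq> P" and w0: "0 \<le> w" and eps0: "0 \<le> eps" and al: "0 < alpha"
    and Q0: "Q0 \<subseteq> P" "real (card P) - z \<le> real (card Q0)"
      "\<forall>eta>0. \<exists>A. centers D k A \<and> cover_cost D A Q0 \<le> r_opt D k P z + eta"
    and G1: "real (card (S - Q0)) \<le> w"
    and G2: "\<forall>E r. centers D k E \<and> r \<ge> 0 \<and> real (card (S - rng D E r)) \<le> (1 + eps) * w
               \<longrightarrow> real (card (P - rng D E r)) \<le> (1 + C) * z"
    and appS: "approx_sol D k eps S w alpha E"
  shows "approx_sol D k C P z alpha E"
proof -
  have fS: "finite S" using SP P finite_subset by blast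
  have cE: "centers D k E" and phS: "phi D eps S w E \<le> alpha * r_opt D k S w"
    using appS unfolding approx_sol_def by auto
  have fE: "finite E" "E \<noteq> {}" using cE unfolding centers_def by auto
  define QS where "QS = {Q'. Q' \<subseteq> S \<and> real (card S) - (1 + eps) * w \<le> real (card Q')}"
  have fQS: "finite (cover_cost D E ` QS)" unfolding QS_def by (rule finite_imageI, rule finite_subset[of _ "Pow S"]) (use fS in auto)
  have SQS: "S \<in> QS" unfolding QS_def using w0 eps0 by auto
  have "phi D eps S w E = Min (cover_cost D E ` QS)" unfolding phi_def QS_def by simp
  also have "\<dots> \<in> cover_cost D E ` QS" using fQS SQS by (intro Min_in) auto
  finally obtain Q1 where Q1: "Q1 \<in> QS" "phi D eps S w E = cover_cost D E Q1" by blast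
  define rho where "rho = cover_cost D E Q1"
  have fQ1: "finite Q1" using Q1(1) fS unfolding QS_def by (auto intro: finite_subset)
  have rho0: "0 \<le> rho" unfolding rho_def using cover_cost_nonneg[OF fE fQ1] .
  have Q1r: "Q1 \<subseteq> rng D E rho" unfolding rho_def by (rule covered_in_rng[OF fE fQ1])
  have "card (S - rng D E rho) \<le> card (S - Q1)" using Q1r fS by (intro card_mono) auto
  also have "card (S - Q1) = card S - card Q1" using Q1(1) fQ1 unfolding QS_def by (simp add: card_Diff_subset)
  finally have le1: "card (S - rng D E rho) \<le> card S - card Q1" .
  have "card Q1 \<le> card S" using Q1(1) fS unfolding QS_def by (simp add: card_mono)
  then have "real (card S - card Q1) = real (card S) - real (card Q1)" by (rule of_nat_diff)
  moreover have "real (card (S - rng D E rho)) \<le> real (card S - card Q1)" using le1 by simp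
  ultimately have "real (card (S - rng D E rho)) \<le> real (card S) - real (card Q1)" by simp
  also have "\<dots> \<le> (1 + eps) * w" using Q1(1) unfolding QS_def by simp
  finally have "real (card (P - rng D E rho)) \<le> (1 + C) * z" using G2 cE rho0 by blast
  define Q2 where "Q2 = P \<inter> rng D E rho"
  have fQ2: "finite Q2" unfolding Q2_def using P by simp
  have cQ2: "real (card P) - (1 + C) * z \<le> real (card Q2)"
  proof -
    have "card P = card Q2 + card (P - rng D E rho)" unfolding Q2_def using P
      by (metis Diff_Diff_Int Int_commute card_Diff_subset_Int finite_Diff inf.cobounded1 card_Int_Diff le_add_diff_inverse card_mono)
    then show ?thesis using \<open>real (card (P - rng D E rho)) \<le> (1 + C) * z\<close> by linarith
  qed
  have phP: "phi D C P z E \<le> cover_cost D E Q2"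
    unfolding phi_def
    by (rule Min_le) (use P cQ2 in \<open>auto simp: Q2_def intro: finite_subset[of _ "Pow P"]\<close>)
  also have "\<dots> \<le> rho" using fE fQ2 rho0 by (intro cover_cost_le) (auto simp: Q2_def rng_def)
  also have "rho = phi D eps S w E" using Q1 unfolding rho_def by simp
  also have "\<dots> \<le> alpha * r_opt D k S w" by (rule phS)
  also have "\<dots> \<le> alpha * r_opt D k P z"
  proof (rule mult_left_mono[OF _ less_imp_le[OF al]])
    show "r_opt D k S w \<le> r_opt D k P z"
    proof (rule field_le_epsilon)
      fix eta :: real assume "0 < eta"
      then obtain A where A: "centers D k A" "cover_cost D A Q0 \<le> r_opt D k P z + eta" using Q0(3) by blast
      have fA: "finite A" "A \<noteq> {}" using A(1) unfolding centers_def by auto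
      define Q3 where "Q3 = S \<inter> Q0"
      have "card S = card Q3 + card (S - Q0)" unfolding Q3_def using fS by (metis card_Int_Diff)
      then have cQ3: "real (card S) - w \<le> real (card Q3)" using G1 by linarith
      have "r_opt D k S w \<le> cover_cost D A Q3" unfolding r_opt_def
      proof (rule cInf_lower)
        show "cover_cost D A Q3 \<in> {cover_cost D A Q' |A Q'. centers D k A \<and> Q' \<subseteq> S \<and> real (card S) - w \<le> real (card Q')}"
          using A(1) cQ3 unfolding Q3_def by blast
        show "bdd_below {cover_cost D A Q' |A Q'. centers D k A \<and> Q' \<subseteq> S \<and> real (card S) - w \<le> real (card Q')}"
        proof (rule bdd_belowI[of _ 0])
          fix v assume "v \<in> {cover_cost D A Q' |A Q'. centers D k A \<and> Q' \<subseteq> S \<and> real (card S) - w \<le> real (card Q')}"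
          then obtain A' Q' where "v = cover_cost D A' Q'" "centers D k A'" "Q' \<subseteq> S" by blast
          then show "0 \<le> v" using cover_cost_nonneg[of A' Q' D] fS unfolding centers_def by (auto intro: finite_subset)
        qed
      qed
      also have "\<dots> \<le> cover_cost D A Q0" using fA Q0(1) P unfolding Q3_def by (intro cover_cost_mono) (auto intro: finite_subset)
      finally show "r_opt D k S w \<le> r_opt D k P z + eta" using A(2) by simp
    qed
  qed
  finally show ?thesis unfolding approx_sol_def using cE by simp
qed

definition mfun :: "nat \<Rightarrow> nat \<Rightarrow> real \<Rightarrow> real \<Rightarrow> nat" where
  "mfun k D eps g = nat \<lceil>10000 * (real k * real D / (eps^2 * g)) * ln (real k * real D / (eps^2 * g))\<rceil>"

lemma pow_succ_ge: "d \<ge> 1 \<Longrightarrow> (a::nat) ^ d + 1 \<le> (a + 1) ^ d"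
proof (induction d rule: dec_induct)
  case base then show ?case by simp
next
  case (step d)
  have "a ^ Suc d + 1 \<le> (a ^ d + 1) * (a + 1)" by (simp add: algebra_simps)
  also have "\<dots> \<le> (a + 1) ^ d * (a + 1)" using step.IH by (intro mult_right_mono) auto
  finally show ?case by (simp add: algebra_simps)
qed

lemma exp1_ge2: "2 \<le> exp (1::real)"
  using exp_ge_add_one_self[of 1] by simp

lemma numeric:
  assumes k: "k \<ge> 1" and D: "D \<ge> 1" and e: "0 < eps" "eps \<le> 1/2" and g: "0 < g" "g < 1"
  shows "1 \<le> mfun k D eps g"
    and "8 * real (((2 * mfun k D eps g + 1) ^ (D + 2) + 1) ^ k) * exp (- (eps^2 * g * real (mfun k D eps g) / 50)) \<le> 1"
    and "real (mfun k D eps g) \<le> 20002 * (real k * real D / (eps^2 * g)) * ln (real k * real D / (eps * g)) ^ 1"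
proof -
  define KD where "KD = real k * real D"
  define L where "L = KD / (eps^2 * g)"
  define m where "m = mfun k D eps g"
  define v where "v = 10000 * L * ln L"
  have KD1: "1 \<le> KD"
  proof -
    have "1 \<le> real k" "1 \<le> real D" using k D by auto
    then have "1 * 1 \<le> real k * real D" by (intro mult_mono) auto
    then show ?thesis unfolding KD_def by simp
  qed
  have e2: "eps^2 \<le> 1/4" using e power_mono[of eps "1/2" 2] by (simp add: power2_eq_square)
  have eg0: "0 < eps^2 * g" using e g by simp
  have eg: "eps^2 * g \<le> 1/4" using mult_mono[of "eps^2" "1/4" g 1] e2 g by simp
  have L4: "4 \<le> L" unfolding L_def using eg0 eg KD1 by (simp add: pos_le_divide_eq)
  have lnL: "1 \<le> ln L"
  proof -
    have "exp 1 \<le> L" using exp_le L4 by linarith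
    then have "ln (exp 1) \<le> ln L" using L4 by (subst ln_le_cancel_iff) auto
    then show ?thesis by simp
  qed
  have lnLL: "ln L \<le> L" using ln_le_minus_one[of L] L4 by linarith
  have LlnL: "1 \<le> L * ln L" using mult_mono[of 1 L 1 "ln L"] L4 lnL by simp
  have v1: "1 \<le> v" unfolding v_def using LlnL by simp
  have mdef: "m = nat \<lceil>v\<rceil>" unfolding m_def mfun_def v_def L_def KD_def by simp
  have "real m = of_int \<lceil>v\<rceil>" unfolding mdef using v1 by simp
  then have mv: "v \<le> real m" "real m \<le> v + 1" by (simp_all add: le_of_int_ceiling of_int_ceiling_le_add_one)
  show "1 \<le> mfun k D eps g" using mv v1 unfolding m_def by simp
  show "real (mfun k D eps g) \<le> 20002 * (real k * real D / (eps^2 * g)) * ln (real k * real D / (eps * g)) ^ 1"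
  proof -
    define X where "X = KD / (eps * g)"
    have X0: "0 < X" unfolding X_def using KD1 e g by simp
    have "L \<le> X^2"
    proof -
      have "X^2 = L * (KD / g)" unfolding X_def L_def using e g by (simp add: field_simps power2_eq_square)
      moreover have "1 \<le> KD / g" using KD1 g by (simp add: pos_le_divide_eq)
      ultimately show ?thesis using L4 mult_left_mono[of 1 "KD / g" L] by simp
    qed
    then have "ln L \<le> ln (X^2)" using L4 X0 by (subst ln_le_cancel_iff) auto
    also have "ln (X^2) = 2 * ln X" using X0 by (simp add: ln_realpow)
    finally have lnX: "ln L \<le> 2 * ln X" .
    have "real m \<le> 10000 * L * ln L + 1" using mv unfolding v_def by simp
    also have "\<dots> \<le> 10001 * (L * ln L)" using LlnL by simp
    also have "\<dots> \<le> 10001 * (L * (2 * ln X))" using lnX L4 by (intro mult_left_mono) auto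
    finally show ?thesis unfolding m_def X_def L_def KD_def by simp
  qed
  define M where "M = eps^2 * g * real m"
  have M1: "10000 * KD * ln L \<le> M"
  proof -
    have "eps^2 * g * v \<le> eps^2 * g * real m" using mv eg0 by (intro mult_left_mono) auto
    moreover have "eps^2 * g * v = 10000 * KD * ln L" unfolding v_def L_def using eg0 by (simp add: field_simps)
    ultimately show ?thesis unfolding M_def by simp
  qed
  have lnm: "ln (2 * real m + 2) \<le> 20 + 2 * ln L"
  proof -
    have "2 * real m + 2 \<le> 2 * (10000 * L * ln L + 1) + 2" using mv unfolding v_def by simp
    also have "\<dots> \<le> 20000 * (L * L) + 4 * (L * L)"
    proof -
      have "L * ln L \<le> L * L" using lnLL L4 by (intro mult_left_mono) auto
      moreover have "1 \<le> L * L" using mult_mono[of 1 L 1 L] L4 by simp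
      moreover have "2 * (10000 * L * ln L + 1) + 2 = 20000 * (L * ln L) + 4" by (simp add: algebra_simps)
      ultimately show ?thesis by linarith
    qed
    also have "\<dots> = 20004 * L^2" by (simp add: power2_eq_square)
    also have "\<dots> \<le> exp 20 * L^2"
    proof -
      have "(2::real) ^ 20 \<le> exp 1 ^ 20" using exp1_ge2 by (intro power_mono) auto
      then have "20004 \<le> exp (20::real)" using exp_of_nat_mult[of 20 "1::real"] by simp
      then show ?thesis by (intro mult_right_mono) auto
    qed
    finally have "2 * real m + 2 \<le> exp 20 * L^2" .
    then have "ln (2 * real m + 2) \<le> ln (exp 20 * L^2)" using L4 by (subst ln_le_cancel_iff) auto
    also have "\<dots> = 20 + 2 * ln L" using L4 by (simp add: ln_mult ln_realpow)
    finally show ?thesis .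
  qed
  define tau where "tau = ((2 * m + 1) ^ (D + 2) + 1) ^ k"
  have tau_le: "tau \<le> (2 * m + 2) ^ ((D + 2) * k)"
  proof -
    have "(2 * m + 1) ^ (D + 2) + 1 \<le> (2 * m + 1 + 1) ^ (D + 2)" by (rule pow_succ_ge) simp
    then have "tau \<le> ((2 * m + 2) ^ (D + 2)) ^ k" unfolding tau_def by (intro power_mono) auto
    then show ?thesis by (simp only: power_mult)
  qed
  have "real tau \<le> real ((2 * m + 2) ^ ((D + 2) * k))" using tau_le by (simp only: of_nat_le_iff)
  also have "real ((2 * m + 2) ^ ((D + 2) * k)) = (2 * real m + 2) ^ ((D + 2) * k)" by (simp add: add.commute)
  also have "\<dots> = exp (real ((D + 2) * k) * ln (2 * real m + 2))"
    by (subst exp_of_nat_mult) simp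
  finally have tau_exp: "real tau \<le> exp (real ((D + 2) * k) * ln (2 * real m + 2))" .
  have "real ((D + 2) * k) * ln (2 * real m + 2) \<le> real ((D + 2) * k) * (20 + 2 * ln L)"
    using lnm by (intro mult_left_mono) auto
  also have "\<dots> \<le> (3 * KD) * (20 + 2 * ln L)"
  proof -
    have "real ((D + 2) * k) \<le> 3 * KD" unfolding KD_def using D k by simp
    then show ?thesis using lnL by (intro mult_right_mono) auto
  qed
  finally have A: "real ((D + 2) * k) * ln (2 * real m + 2) \<le> 60 * KD + 6 * (KD * ln L)" by (simp add: algebra_simps)
  have B: "3 + 60 * KD + 6 * (KD * ln L) \<le> M / 50"
  proof -
    have "KD \<le> KD * ln L" using KD1 lnL mult_left_mono[of 1 "ln L" KD] by simp
    moreover have "10000 * KD * ln L = 10000 * (KD * ln L)" by simp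
    ultimately show ?thesis using M1 KD1 by linarith
  qed
  have "8 * real tau * exp (- (M / 50)) \<le> exp 3 * exp (real ((D + 2) * k) * ln (2 * real m + 2)) * exp (- (M / 50))"
  proof -
    have "(2::real) ^ 3 \<le> exp 1 ^ 3" using exp1_ge2 by (intro power_mono) auto
    then have "8 \<le> exp (3::real)" using exp_of_nat_mult[of 3 "1::real"] by simp
    then show ?thesis using tau_exp by (intro mult_right_mono mult_mono) auto
  qed
  also have "\<dots> = exp (3 + real ((D + 2) * k) * ln (2 * real m + 2) + - (M / 50))" by (simp only: mult_exp_exp)
  also have "\<dots> \<le> exp 0" using A B by simp
  finally show "8 * real (((2 * mfun k D eps g + 1) ^ (D + 2) + 1) ^ k) * exp (- (eps^2 * g * real (mfun k D eps g) / 50)) \<le> 1"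
    unfolding tau_def M_def m_def by simp
qed

lemma kap_bound:
  fixes u e :: real
  assumes u: "0 < u" and e: "0 < e" "e \<le> 1/2"
  shows "e^2 * u / 50 \<le> ((1 + 5*e) * u) * ((1 + 5*e) * u - (1 + e)^2 * u)^2 / (8 * ((1 + e)^2 * u + (1 + 5*e) * u)^2)"
proof -
  define x where "x = (1 + e)^2 * u"
  define x' where "x' = (1 + 5*e) * u"
  define d where "d = x' - x"
  define s where "s = x + x'"
  have d: "5/2 * e * u \<le> d"
  proof -
    have "d = (3 * e - e^2) * u" unfolding d_def x_def x'_def by (simp add: power2_eq_square algebra_simps)
    moreover have "e * e \<le> e * (1/2)" using e by (intro mult_left_mono) auto
    then have "5/2 * e \<le> 3 * e - e^2" by (simp add: power2_eq_square)
    ultimately show ?thesis using u by (simp add: mult_right_mono)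
  qed
  have s: "s \<le> 6 * u" "0 < s"
  proof -
    have "s = (2 + 7 * e + e^2) * u" unfolding s_def x_def x'_def by (simp add: power2_eq_square algebra_simps)
    moreover have "e * e \<le> e * (1/2)" using e by (intro mult_left_mono) auto
    then have "2 + 7 * e + e^2 \<le> 6" using e unfolding power2_eq_square by linarith
    moreover have "0 < 2 + 7 * e + e^2" using e by (simp add: add_pos_nonneg)
    ultimately show "s \<le> 6 * u" "0 < s" using u by (simp_all add: mult_right_mono)
  qed
  have x': "u \<le> x'" unfolding x'_def using u e by simp
  have d2: "(5/2 * e * u)^2 \<le> d^2" using d e u by (intro power_mono) auto
  have s2: "s^2 \<le> (6 * u)^2" using s by (intro power_mono) auto
  have num: "u * (5/2 * e * u)^2 \<le> x' * d^2" using x' d2 u by (intro mult_mono) auto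
  have "0 \<le> x' * d^2" using x' u by simp
  have "u * (5/2 * e * u)^2 / (8 * (6 * u)^2) \<le> x' * d^2 / (8 * s^2)"
    using num s2 s u \<open>0 \<le> x' * d^2\<close> by (intro frac_le) (auto intro: mult_nonneg_nonneg)
  moreover have "u * (5/2 * e * u)^2 / (8 * (6 * u)^2) = 25 / 1152 * (e^2 * u)"
    using u by (simp add: field_simps power2_eq_square)
  moreover have "e^2 * u / 50 \<le> 25 / 1152 * (e^2 * u)" using u by simp
  ultimately show ?thesis unfolding x_def x'_def d_def s_def by linarith
qed

lemma half_bound:
  fixes u e :: real
  assumes u: "0 < u" and e: "0 < e" "e \<le> 1/2"
  shows "e^2 * u / 50 \<le> ((1 + 10*e) * u - (1 + 5*e) * u)^2 / (4 * ((1 + 10*e) * u))"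
proof -
  have a: "(1 + 10*e) * u - (1 + 5*e) * u = 5 * e * u" by (simp add: algebra_simps)
  have c: "0 < 4 * ((1 + 10*e) * u)" using u e by simp
  have "e^2 * u / 50 * (4 * ((1 + 10*e) * u)) \<le> (5 * e * u)^2"
  proof -
    have eq1: "e^2 * u / 50 * (4 * ((1 + 10*e) * u)) = (4 * (1 + 10*e) / 50) * (e^2 * u^2)"
      by (simp add: field_simps power2_eq_square)
    have eq2: "(5 * e * u)^2 = 25 * (e^2 * u^2)" by (simp add: power2_eq_square)
    have "4 * (1 + 10*e) / 50 \<le> 25" using e by simp
    then have "(4 * (1 + 10*e) / 50) * (e^2 * u^2) \<le> 25 * (e^2 * u^2)" by (intro mult_right_mono) auto
    then show ?thesis unfolding eq1 eq2 .
  qed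
  then show ?thesis unfolding a pos_le_divide_eq[OF c] .
qed

lemma direct_bound:
  fixes u e :: real
  assumes u: "0 < u" and e: "0 < e" "e \<le> 1/2"
  shows "e^2 * u / 50 \<le> ((1 + 10*e) * u - (1 + e)^2 * u)^2 / (4 * ((1 + 10*e) * u))"
proof -
  have "(1 + 10*e) * u - (1 + e)^2 * u = (8 * e - e^2) * u" by (simp add: power2_eq_square algebra_simps)
  moreover have "(8 * e - e^2) * u \<ge> (1 + 10*e) * u - (1 + 5*e) * u"
  proof -
    have "e * e \<le> e * (1/2)" using e by (intro mult_left_mono) auto
    then have "5 * e \<le> 8 * e - e^2" using e by (simp add: power2_eq_square)
    then show ?thesis using u by (simp add: algebra_simps mult_right_mono)
  qed
  moreover have "0 \<le> (1 + 10*e) * u - (1 + 5*e) * u" using u e by (simp add: algebra_simps)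
  ultimately have "((1 + 10*e) * u - (1 + 5*e) * u)^2 \<le> ((1 + 10*e) * u - (1 + e)^2 * u)^2"
    by (intro power_mono) auto
  then have "((1 + 10*e) * u - (1 + 5*e) * u)^2 / (4 * ((1 + 10*e) * u)) \<le> ((1 + 10*e) * u - (1 + e)^2 * u)^2 / (4 * ((1 + 10*e) * u))"
    using u e by (intro divide_right_mono) auto
  then show ?thesis using half_bound[OF assms] by linarith
qed

lemma main_prob:
  fixes D k n z :: nat and P :: "(nat \<Rightarrow> real) set" and e al :: real
  assumes k: "k \<ge> 1" and D: "D \<ge> 1" and P: "finite P" and n: "card P = n" and z: "0 < z" "z < n"
    and e: "0 < e" "e \<le> 1/2" and al: "0 < al" and mn: "mfun k D e (real z / real n) \<le> n"
  shows "1/2 \<le> measure_pmf.prob (pmf_of_set {S. S \<subseteq> P \<and> card S = mfun k D e (real z / real n)})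
         {S. \<forall>E. approx_sol D k e S ((1 + e) * (real z / real n) * real (card S)) al E
                 \<longrightarrow> approx_sol D k (10 * e) P (real z) al E}"
proof -
  define g where "g = real z / real n"
  define m where "m = mfun k D e g"
  have n0: "0 < n" using z by simp
  have g0: "0 < g" "g < 1" unfolding g_def using z n0 by auto
  have m1: "1 \<le> m" unfolding m_def using numeric(1)[OF k D e g0] .
  have mn': "m \<le> n" using mn unfolding m_def g_def .
  define tau where "tau = real (((2 * m + 1) ^ (D + 2) + 1) ^ k)"
  define M where "M = e^2 * g * real m"
  have num: "8 * tau * exp (- (M / 50)) \<le> 1" unfolding tau_def M_def m_def using numeric(2)[OF k D e g0] by simp
  have tau1: "1 \<le> tau" unfolding tau_def by simp
  have ex8: "exp (- (M / 50)) \<le> 1/8"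
  proof -
    have "8 * exp (- (M / 50)) \<le> 8 * tau * exp (- (M / 50))" using tau1 by simp
    then show ?thesis using num by linarith
  qed
  define X where "X = msub P m"
  have Xeq: "{S. S \<subseteq> P \<and> card S = m} = X" unfolding X_def msub_def by simp
  have fX: "finite X" unfolding X_def using finite_msub[OF P] .
  define CX where "CX = real (n choose m)"
  have cX: "real (card X) = CX" unfolding X_def CX_def using card_msub[OF P] n by simp
  have CX0: "0 < CX" unfolding CX_def using mn' by simp
  have Xne: "X \<noteq> {}" using cX CX0 by auto
  obtain Q0 where Q0: "Q0 \<subseteq> P" "real (card P) - real z \<le> real (card Q0)"
     "\<forall>eta>0. \<exists>A. centers D k A \<and> cover_cost D A Q0 \<le> r_opt D k P (real z) + eta"
    using Q0_exists[OF P k, of "real z" D] by auto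
  define u where "u = g * real m"
  have u0: "0 < u" unfolding u_def using g0 m1 by simp
  have Mu: "M = e^2 * u" unfolding M_def u_def by simp
  define w where "w = (1 + e) * u"
  define x where "x = (1 + e)^2 * u"
  define x' where "x' = (1 + 5 * e) * u"
  define mu1 where "mu1 = (1 + 10 * e) * u"
  define y where "y = (1 + 10 * e) * real z"
  have zg: "real z = g * real n" unfolding g_def using n0 by simp
  have xw: "x = (1 + e) * w" unfolding x_def w_def by (simp add: power2_eq_square)
  have ee: "e * e \<le> e * (1/2)" using e by (intro mult_left_mono) auto
  define Bad1 where "Bad1 = {S\<in>X. w \<le> real (card (S \<inter> (P - Q0)))}"
  have b1: "real (card Bad1) \<le> CX / 4"
  proof -
    have cPQ: "real (card (P - Q0)) \<le> real z"
      using Q0(1,2) P n by (simp add: card_Diff_subset finite_subset of_nat_diff card_mono)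
    have "real (card (P - Q0)) * real m / real (card P) \<le> real z * real m / real n"
      using cPQ n n0 by (simp add: divide_right_mono mult_right_mono)
    also have "\<dots> = u" unfolding u_def g_def by simp
    finally have h: "real (card (P - Q0)) * real m / real (card P) \<le> u" .
    have "real (card Bad1) \<le> real (card P choose m) * exp (- ((w - u)^2 / (4 * u)))"
      unfolding Bad1_def X_def
    proof (rule chernoff_upper[OF P _ _ _ h u0])
      show "P - Q0 \<subseteq> P" by auto
      show "0 < card P" "m \<le> card P" using n n0 mn' by auto
      show "u \<le> w" "w \<le> 3 * u" unfolding w_def using u0 e by auto
    qed
    also have "(w - u)^2 / (4 * u) = e^2 * u / 4" unfolding w_def using u0 by (simp add: field_simps power2_eq_square)
    also have "exp (- (e^2 * u / 4)) \<le> exp (- (M / 50))" unfolding Mu using u0 by simp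
    finally have "real (card Bad1) \<le> real (card P choose m) * exp (- (M / 50))"
      by (smt (verit) mult_left_mono of_nat_0_le_iff)
    also have "\<dots> \<le> real (card P choose m) * (1/8)" using ex8 by (intro mult_left_mono) auto
    finally show ?thesis unfolding CX_def n by simp
  qed
  define B2 where "B2 = Bad2 D k P m x y"
  have xx: "x < x'"
  proof -
    have "(1 + e)^2 < 1 + 5 * e" using ee e unfolding power2_eq_square by (simp add: algebra_simps)
    then show ?thesis unfolding x_def x'_def using u0 by simp
  qed
  have x0: "0 \<le> x" unfolding x_def using u0 by simp
  have b2: "real (card B2) \<le> CX / 4"
  proof (cases "2 * m \<le> n")
    case True
    have m0: "0 < m" using m1 by simp
    have mu1p: "0 < mu1" "x' \<le> mu1" unfolding mu1_def x'_def using u0 e by auto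
    have mucond: "mu1 * (real (card P) - real m) \<le> (y - x) * real m"
    proof -
      have "(y - x) * real m - mu1 * (real (card P) - real m) = g * real m * real m * ((1 + 10 * e) - (1 + e)^2)"
        unfolding y_def x_def mu1_def u_def zg n by (simp add: algebra_simps)
      moreover have "0 \<le> (1 + 10 * e) - (1 + e)^2" using ee e unfolding power2_eq_square by (simp add: algebra_simps)
      ultimately have "0 \<le> g * real m * real m * ((1 + 10 * e) - (1 + e)^2)" using g0 by simp
      then show ?thesis using \<open>(y - x) * real m - mu1 * (real (card P) - real m) = _\<close> by linarith
    qed
    have half: "exp (- ((mu1 - x')^2 / (4 * mu1))) \<le> 1/2"
    proof -
      have "M / 50 \<le> (mu1 - x')^2 / (4 * mu1)" unfolding Mu mu1_def x'_def using half_bound[OF u0 e] by simp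
      then have "exp (- ((mu1 - x')^2 / (4 * mu1))) \<le> exp (- (M / 50))" by simp
      then show ?thesis using ex8 by linarith
    qed
    have tauT: "real (card (trk D k T)) \<le> tau" if "T \<subseteq> P" "card T = 2 * m" for T
    proof -
      have "finite T" using that P finite_subset by blast
      then have "card (trk D k T) \<le> ((card T + 1) ^ (D + 2) + 1) ^ k" by (rule trk_bound)
      then have "card (trk D k T) \<le> ((2 * m + 1) ^ (D + 2) + 1) ^ k" unfolding that(2) .
      then show ?thesis unfolding tau_def by (simp only: of_nat_le_iff)
    qed
    have "real (card B2) \<le> 2 * tau * real (card P choose m) * exp (- (x' * (x' - x)^2 / (8 * (x + x')^2)))"
      unfolding B2_def using bad2_sym[OF P _ m0 x0 xx mu1p mucond half tauT] True n by blast
    also have "\<dots> \<le> 2 * tau * real (card P choose m) * exp (- (M / 50))"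
    proof -
      have "M / 50 \<le> x' * (x' - x)^2 / (8 * (x + x')^2)" unfolding Mu x_def x'_def using kap_bound[OF u0 e] by simp
      then show ?thesis using tau1 by (intro mult_left_mono) auto
    qed
    also have "\<dots> = (8 * tau * exp (- (M / 50))) * (real (card P choose m) / 4)" by simp
    also have "\<dots> \<le> 1 * (real (card P choose m) / 4)" using num by (intro mult_right_mono) auto
    finally show ?thesis unfolding CX_def n by simp
  next
    case False
    have ymn: "y * real m / real (card P) = mu1" unfolding y_def mu1_def u_def zg n using n0 by simp
    have "real (card B2) \<le> real (card (trk D k P)) * (real (card P choose m) * exp (- ((mu1 - x)^2 / (4 * mu1))))"
    proof -
      have "x' \<le> mu1" unfolding x'_def mu1_def using u0 e by (intro mult_right_mono) auto
      then have "x \<le> mu1" using xx by linarith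
      moreover have "0 < mu1" unfolding mu1_def using u0 e by simp
      ultimately have "real (card (Bad2 D k P m x y)) \<le> real (card (trk D k P)) *
           (real (card P choose m) * exp (- ((y * real m / real (card P) - x)^2 / (4 * (y * real m / real (card P))))))"
        using ymn n n0 mn' by (intro bad2_direct[OF P _ _ x0]) auto
      then show ?thesis unfolding B2_def ymn .
    qed
    also have "\<dots> \<le> tau * (real (card P choose m) * exp (- (M / 50)))"
    proof (rule mult_mono)
      have "card (trk D k P) \<le> ((card P + 1) ^ (D + 2) + 1) ^ k" by (rule trk_bound[OF P])
      also have "\<dots> \<le> ((2 * m + 1) ^ (D + 2) + 1) ^ k" using False n by (intro power_mono add_mono) auto
      finally show "real (card (trk D k P)) \<le> tau" unfolding tau_def by (simp only: of_nat_le_iff)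
      have "M / 50 \<le> (mu1 - x)^2 / (4 * mu1)" unfolding Mu mu1_def x_def using direct_bound[OF u0 e] by simp
      then show "real (card P choose m) * exp (- ((mu1 - x)^2 / (4 * mu1))) \<le> real (card P choose m) * exp (- (M / 50))"
        by (intro mult_left_mono) auto
    qed (use tau1 in auto)
    also have "\<dots> = (8 * tau * exp (- (M / 50))) * (real (card P choose m) / 8)" by simp
    also have "\<dots> \<le> 1 * (real (card P choose m) / 8)" using num by (intro mult_right_mono) auto
    finally show ?thesis unfolding CX_def n by simp
  qed
  define Good where "Good = {S. \<forall>E. approx_sol D k e S ((1 + e) * (real z / real n) * real (card S)) al E
                 \<longrightarrow> approx_sol D k (10 * e) P (real z) al E}"
  have sub: "X - Bad1 - B2 \<subseteq> Good"
  proof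
    fix S assume S: "S \<in> X - Bad1 - B2"
    then have SP: "S \<subseteq> P" and cS: "card S = m" unfolding X_def msub_def by auto
    have wS: "(1 + e) * (real z / real n) * real (card S) = w" unfolding w_def u_def g_def cS by simp
    have G1: "real (card (S - Q0)) \<le> w"
    proof -
      have "S - Q0 = S \<inter> (P - Q0)" using SP by auto
      then show ?thesis using S unfolding Bad1_def by auto
    qed
    have G2: "\<forall>E r. centers D k E \<and> r \<ge> 0 \<and> real (card (S - rng D E r)) \<le> (1 + e) * w
               \<longrightarrow> real (card (P - rng D E r)) \<le> (1 + 10 * e) * real z"
      using S unfolding B2_def Bad2_def X_def xw[symmetric] y_def by (auto simp: not_less)
    have w0: "0 \<le> w" unfolding w_def using u0 e by simp
    have e0: "0 \<le> e" using e by simp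
    show "S \<in> Good" unfolding Good_def
    proof (intro CollectI allI impI)
      fix E assume A: "approx_sol D k e S ((1 + e) * (real z / real n) * real (card S)) al E"
      then have "approx_sol D k e S w al E" unfolding wS .
      then show "approx_sol D k (10 * e) P (real z) al E"
        by (rule transfer[OF P SP w0 e0 al Q0 G1 G2])
    qed
  qed
  have "X \<subseteq> (X \<inter> Good) \<union> Bad1 \<union> B2" using sub by blast
  then have "card X \<le> card ((X \<inter> Good) \<union> Bad1 \<union> B2)"
    using fX unfolding Bad1_def B2_def Bad2_def X_def by (intro card_mono) (auto simp: finite_msub[OF P])
  also have "\<dots> \<le> card (X \<inter> Good) + card Bad1 + card B2"
  proof -
    have "card ((X \<inter> Good) \<union> Bad1 \<union> B2) \<le> card ((X \<inter> Good) \<union> Bad1) + card B2" by (rule card_Un_le)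
    moreover have "card ((X \<inter> Good) \<union> Bad1) \<le> card (X \<inter> Good) + card Bad1" by (rule card_Un_le)
    ultimately show ?thesis by linarith
  qed
  finally have "CX \<le> real (card (X \<inter> Good)) + real (card Bad1) + real (card B2)" using cX by linarith
  then have "CX / 2 \<le> real (card (X \<inter> Good))" using b1 b2 by linarith
  then have "1/2 \<le> real (card (X \<inter> Good)) / real (card X)" using cX CX0 by (simp add: field_simps)
  also have "\<dots> = measure_pmf.prob (pmf_of_set X) Good" using measure_pmf_of_set[OF Xne fX] by simp
  finally show ?thesis unfolding Good_def Xeq[symmetric] m_def g_def by simp
qed

theorem theorem11:
  shows "\<exists>C::real>0. \<exists>p0::real>0. \<exists>m :: nat \<Rightarrow> nat \<Rightarrow> real \<Rightarrow> real \<Rightarrow> nat.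
    (\<exists>c0::real. \<exists>c1::nat. \<forall>k D \<epsilon> \<gamma>. k \<ge> 1 \<longrightarrow> D \<ge> 1 \<longrightarrow> 0 < \<epsilon> \<longrightarrow> \<epsilon> \<le> 1/2 \<longrightarrow> 0 < \<gamma> \<longrightarrow> \<gamma> < 1 \<longrightarrow>
        real (m k D \<epsilon> \<gamma>) \<le> c0 * (real k * real D / (\<epsilon>^2 * \<gamma>)) * (ln (real k * real D / (\<epsilon> * \<gamma>))) ^ c1) \<and>
    (\<forall>D k (P :: (nat \<Rightarrow> real) set) (n::nat) (z::nat) \<epsilon> \<alpha>.
       k \<ge> 1 \<longrightarrow> D \<ge> 1 \<longrightarrow> finite P \<longrightarrow> P \<subseteq> RD D \<longrightarrow> card P = n \<longrightarrow> 0 < z \<longrightarrow> z < n \<longrightarrow>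
       0 < \<epsilon> \<longrightarrow> \<epsilon> \<le> 1/2 \<longrightarrow> 0 < \<alpha> \<longrightarrow> m k D \<epsilon> (real z / real n) \<le> n \<longrightarrow>
       measure_pmf.prob (pmf_of_set {S. S \<subseteq> P \<and> card S = m k D \<epsilon> (real z / real n)})
         {S. \<forall>E. approx_sol D k \<epsilon> S ((1 + \<epsilon>) * (real z / real n) * real (card S)) \<alpha> E
                 \<longrightarrow> approx_sol D k (C * \<epsilon>) P (real z) \<alpha> E} \<ge> p0)"
proof -
  have p1: "\<exists>c0::real. \<exists>c1::nat. \<forall>k D \<epsilon> \<gamma>. k \<ge> 1 \<longrightarrow> D \<ge> 1 \<longrightarrow> 0 < \<epsilon> \<longrightarrow> \<epsilon> \<le> 1/2 \<longrightarrow> 0 < \<gamma> \<longrightarrow> \<gamma> < 1 \<longrightarrow>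
        real (mfun k D \<epsilon> \<gamma>) \<le> c0 * (real k * real D / (\<epsilon>^2 * \<gamma>)) * (ln (real k * real D / (\<epsilon> * \<gamma>))) ^ c1"
    apply (rule exI[of _ 20002], rule exI[of _ "1::nat"])
    apply (intro allI impI)
    apply (rule numeric(3))
         apply assumption+
    done
  have p2: "\<forall>D k (P :: (nat \<Rightarrow> real) set) (n::nat) (z::nat) \<epsilon> \<alpha>.
       k \<ge> 1 \<longrightarrow> D \<ge> 1 \<longrightarrow> finite P \<longrightarrow> P \<subseteq> RD D \<longrightarrow> card P = n \<longrightarrow> 0 < z \<longrightarrow> z < n \<longrightarrow>
       0 < \<epsilon> \<longrightarrow> \<epsilon> \<le> 1/2 \<longrightarrow> 0 < \<alpha> \<longrightarrow> mfun k D \<epsilon> (real z / real n) \<le> n \<longrightarrow>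
       measure_pmf.prob (pmf_of_set {S. S \<subseteq> P \<and> card S = mfun k D \<epsilon> (real z / real n)})
         {S. \<forall>E. approx_sol D k \<epsilon> S ((1 + \<epsilon>) * (real z / real n) * real (card S)) \<alpha> E
                 \<longrightarrow> approx_sol D k (10 * \<epsilon>) P (real z) \<alpha> E} \<ge> 1/2"
    apply (intro allI impI)
    apply (rule main_prob)
              apply assumption+
    done
  show ?thesis
    apply (rule exI[of _ "10::real"], rule conjI, simp)
    apply (rule exI[of _ "1/2::real"], rule conjI, simp)
    apply (rule exI[of _ mfun], rule conjI)
     apply (rule p1)
    apply (rule p2)
    done
qed

end
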